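(* There exists a constant $C>0$ such that for all $\eta,\bar\eta\in H$, denoting by $X(\cdot)=X(\cdot;\eta,0)$ and $\bar X(\cdot)=X(\cdot;\bar\eta,0)$ the mild solutions with null control, $$\|X(t)-\bar X(t)\|_{-1}\le C\|\eta-\bar\eta\|_{-1}\quad\text{and}\quad |X_0(t)-\bar X_0(t)|\le rC\|\eta-\bar\eta\|_{-1}\qquad\forall t\in[0,T].$$
   Context: $T>0$, $r>0$. $L^2_{-T}:=L^2([-T,0];\mathbb{R})$, $W^{1,2}_{-T}:=W^{1,2}([-T,0];\mathbb{R})$, $H:=\mathbb{R}\times L^2_{-T}$ with norm $\|\cdot\|$. $A:\mathcal{D}(A)\subset H\to H$, $\mathcal{D}(A):=\{\eta\in H:\eta_1\in W^{1,2}_{-T},\ \eta_1(0)=\eta_0\}$, $A(\eta_0,\eta_1):=(r\eta_0,\eta_1')$, generating the semigroup $S(t)(\eta_0,\eta_1)=\big(\eta_0e^{rt},I_{[-T,0]}(t+\cdot)\eta_1(t+\cdot)+I_{[0,\infty)}(t+\cdot)\eta_0e^{r(t+\cdot)}\big)$; $A^{-1}(\eta_0,\eta_1)=\big(\frac{\eta_0}{r},\ s\mapsto\frac{\eta_0}{r}-\int_s^0\eta_1\big)$, $\|\eta\|_{-1}:=\|A^{-1}\eta\|$. $a\in W^{1,2}_{-T}$, $a\ge0$, $a(-T)=0$; $f_0:\mathbb{R}^2\to\mathbb{R}$ Lipschitz. $f(\eta):=f_0(\eta_0,\int_{-T}^0a\eta_1)$, $F(\eta):=(f(\eta),0)$,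 $\hat n:=(1,0)$. For $\eta\in H$ and a control $c\in L^1_{loc}([0,\infty);[0,\infty))$, $X(\cdot;\eta,c)=(X_0,X_1)$ is the unique $X\in C([0,\infty);H)$ with $X(t)=S(t)\eta+\int_0^tS(t-\tau)F(X(\tau))d\tau-\int_0^tc(\tau)S(t-\tau)\hat n\,d\tau$. *)

theory Defs
  imports "HOL-Analysis.Analysis"
begin

text \<open>Elements of H = R x L2([-T,0]) are represented as pairs (eta0, eta1) with
  eta1 :: real => real; membership in H means eta1 is Borel measurable and square
  integrable on [-T,0].\<close>

type_synonym hval = "real \<times> (real \<Rightarrow> real)"

definition L2 :: "real \<Rightarrow> (real \<Rightarrow> real) \<Rightarrow> bool" where
  "L2 T g \<longleftrightarrow> set_borel_measurable lborel {-T..0} g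
      \<and> set_integrable lborel {-T..0} (\<lambda>s. (g s)\<^sup>2)"

definition in_H :: "real \<Rightarrow> hval \<Rightarrow> bool" where
  "in_H T \<eta> \<longleftrightarrow> L2 T (snd \<eta>)"

definition W12 :: "real \<Rightarrow> (real \<Rightarrow> real) \<Rightarrow> bool" where
  "W12 T a \<longleftrightarrow> (\<exists>a'. L2 T a' \<and>
      (\<forall>s\<in>{-T..0}. a s = a (-T) + (LBINT u:{-T..s}. a' u)))"

definition hnorm :: "real \<Rightarrow> hval \<Rightarrow> real" where
  "hnorm T \<eta> = sqrt ((fst \<eta>)\<^sup>2 + (LBINT s:{-T..0}. (snd \<eta> s)\<^sup>2))"

definition hdiff :: "hval \<Rightarrow> hval \<Rightarrow> hval" where
  "hdiff \<eta> \<xi> = (fst \<eta> - fst \<xi>, \<lambda>s. snd \<eta> s - snd \<xi> s)"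

definition heq :: "real \<Rightarrow> hval \<Rightarrow> hval \<Rightarrow> bool" where
  "heq T \<eta> \<xi> \<longleftrightarrow> fst \<eta> = fst \<xi> \<and>
      (AE s in lborel. s \<in> {-T..0} \<longrightarrow> snd \<eta> s = snd \<xi> s)"

definition Ainv :: "real \<Rightarrow> hval \<Rightarrow> hval" where
  "Ainv r \<eta> = (fst \<eta> / r, \<lambda>s. fst \<eta> / r - (LBINT u:{s..0}. snd \<eta> u))"

definition norm_m1 :: "real \<Rightarrow> real \<Rightarrow> hval \<Rightarrow> real" where
  "norm_m1 T r \<eta> = hnorm T (Ainv r \<eta>)"

definition Ssg :: "real \<Rightarrow> real \<Rightarrow> real \<Rightarrow> hval \<Rightarrow> hval" where
  "Ssg T r t \<eta> = (fst \<eta> * exp (r * t),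
      \<lambda>s. indicator {-T..0} (t + s) * snd \<eta> (t + s)
         + indicator {0..} (t + s) * fst \<eta> * exp (r * (t + s)))"

definition fF :: "real \<Rightarrow> (real \<Rightarrow> real) \<Rightarrow> (real \<times> real \<Rightarrow> real) \<Rightarrow> hval \<Rightarrow> real" where
  "fF T a f0 \<eta> = f0 (fst \<eta>, LBINT s:{-T..0}. a s * snd \<eta> s)"

definition FF :: "real \<Rightarrow> (real \<Rightarrow> real) \<Rightarrow> (real \<times> real \<Rightarrow> real) \<Rightarrow> hval \<Rightarrow> hval" where
  "FF T a f0 \<eta> = (fF T a f0 \<eta>, \<lambda>_. 0)"

definition nhat :: hval where "nhat = (1, \<lambda>_. 0)"

text \<open>Right-hand side of the mild formulation; the H-valued integrals are computed
  componentwise (pointwise in s for the L2 component).\<close>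
definition mild_rhs :: "real \<Rightarrow> real \<Rightarrow> (real \<Rightarrow> real) \<Rightarrow> (real \<times> real \<Rightarrow> real)
    \<Rightarrow> (real \<Rightarrow> real) \<Rightarrow> hval \<Rightarrow> (real \<Rightarrow> hval) \<Rightarrow> real \<Rightarrow> hval" where
  "mild_rhs T r a f0 c \<eta> X t =
     (fst (Ssg T r t \<eta>)
        + (LBINT \<tau>:{0..t}. fst (Ssg T r (t - \<tau>) (FF T a f0 (X \<tau>))))
        - (LBINT \<tau>:{0..t}. c \<tau> * fst (Ssg T r (t - \<tau>) nhat)),
      \<lambda>s. snd (Ssg T r t \<eta>) s
        + (LBINT \<tau>:{0..t}. snd (Ssg T r (t - \<tau>) (FF T a f0 (X \<tau>))) s)
        - (LBINT \<tau>:{0..t}. c \<tau> * snd (Ssg T r (t - \<tau>) nhat) s))"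

definition mild_sol :: "real \<Rightarrow> real \<Rightarrow> (real \<Rightarrow> real) \<Rightarrow> (real \<times> real \<Rightarrow> real)
    \<Rightarrow> (real \<Rightarrow> real) \<Rightarrow> hval \<Rightarrow> (real \<Rightarrow> hval) \<Rightarrow> bool" where
  "mild_sol T r a f0 c \<eta> X \<longleftrightarrow>
     (\<forall>t\<ge>0. in_H T (X t)) \<and>
     (\<forall>t\<ge>0. ((\<lambda>\<tau>. hnorm T (hdiff (X \<tau>) (X t))) \<longlongrightarrow> 0) (at t within {0..})) \<and>
     (\<forall>t\<ge>0. heq T (X t) (mild_rhs T r a f0 c \<eta> X t))"

end

theory Submission
  imports Defs
begin

lemma abs_int_bound:
  fixes F B :: "real \<Rightarrow> real"
  assumes "integrable lborel B" "\<And>x. \<bar>F x\<bar> \<le> B x"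
  shows "\<bar>integral\<^sup>L lborel F\<bar> \<le> integral\<^sup>L lborel B"
proof (cases "integrable lborel F")
  case True
  then show ?thesis using assms by (intro integral_abs_bound_integral) auto
next
  case False
  then show ?thesis using assms
    by (simp add: not_integrable_integral_eq) (metis abs_ge_zero integral_nonneg_AE AE_I2 order_trans)
qed

lemma real_amgm_lim:
  fixes x A B :: real
  assumes "A \<ge> 0" "B \<ge> 0" "\<And>e. e > 0 \<Longrightarrow> x \<le> (e * A + B / e) / 2"
  shows "x \<le> sqrt A * sqrt B"
proof (cases "x \<le> 0")
  case True then show ?thesis using assms by (meson order_trans real_sqrt_ge_zero mult_nonneg_nonneg)
next
  case False
  then have x: "x > 0" by simp
  show ?thesis
  proof (cases "A > 0 \<and> B > 0")
    case True
    have sa: "sqrt A > 0" "sqrt B > 0" using True by auto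
    have "x \<le> (sqrt B / sqrt A * A + B / (sqrt B / sqrt A)) / 2"
      using True sa by (intro assms(3)) auto
    also have "sqrt B / sqrt A * A = sqrt A * sqrt B"
    proof -
      have "A = sqrt A * sqrt A" using True by simp
      then show ?thesis using sa by (metis nonzero_mult_div_cancel_left order_less_irrefl times_divide_eq_left mult.commute)
    qed
    also have "B / (sqrt B / sqrt A) = sqrt A * sqrt B"
    proof -
      have "B = sqrt B * sqrt B" using True by simp
      then show ?thesis using sa by (metis divide_divide_eq_right mult.commute order_less_irrefl nonzero_mult_div_cancel_left)
    qed
    finally show ?thesis by simp
  next
    case False
    then consider "A = 0" | "B = 0" using assms by linarith
    then show ?thesis
    proof cases
      case 1
      have c: "(B+1)/x > 0" using x assms by simp
      have "x \<le> (((B+1)/x) * A + B / ((B+1)/x)) / 2" using c by (rule assms(3))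
      also have "B / ((B+1)/x) = B*x/(B+1)" by simp
      finally have h: "x \<le> (B*x/(B+1)) / 2" using 1 by simp
      have "B*x/(B+1) \<le> x" using assms(2) x by (simp add: divide_le_eq algebra_simps)
      then have "x \<le> x / 2" using h by (meson divide_right_mono order_trans zero_le_numeral)
      then show ?thesis using x by simp
    next
      case 2
      have c: "x/(A+1) > 0" using x assms by simp
      have "x \<le> ((x/(A+1)) * A + B / (x/(A+1))) / 2" using c by (rule assms(3))
      then have h: "x \<le> (x * A / (A+1)) / 2" using 2 by simp
      have "x * A/(A+1) \<le> x" using assms(1) x by (simp add: divide_le_eq algebra_simps)
      then have "x \<le> x / 2" using h by (meson divide_right_mono order_trans zero_le_numeral)
      then show ?thesis using x by simp
    qed
  qed
qed

lemma amgm2: fixes u v e :: real assumes e: "e > 0" shows "\<bar>u * v\<bar> \<le> (e*u\<^sup>2 + v\<^sup>2/e)/2"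
proof -
  have "0 \<le> (e*\<bar>u\<bar> - \<bar>v\<bar>)\<^sup>2" by simp
  also have "\<dots> = e\<^sup>2*u\<^sup>2 + v\<^sup>2 - 2*e*\<bar>u * v\<bar>"
    by (simp add: power2_diff power_mult_distrib abs_mult)
  finally have "2*e*\<bar>u * v\<bar> \<le> e*(e*u\<^sup>2 + v\<^sup>2/e)" using e by (simp add: algebra_simps power2_eq_square)
  then show ?thesis using e by (simp add: mult_le_cancel_left_pos)
qed

lemma cs_int:
  fixes f g :: "real \<Rightarrow> real"
  assumes [measurable]: "f \<in> borel_measurable lborel" "g \<in> borel_measurable lborel"
    and i1: "integrable lborel (\<lambda>x. (f x)\<^sup>2)" and i2: "integrable lborel (\<lambda>x. (g x)\<^sup>2)"
  shows "integrable lborel (\<lambda>x. f x * g x)"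
    and "integral\<^sup>L lborel (\<lambda>x. \<bar>f x * g x\<bar>) \<le> sqrt (integral\<^sup>L lborel (\<lambda>x. (f x)\<^sup>2)) * sqrt (integral\<^sup>L lborel (\<lambda>x. (g x)\<^sup>2))"
proof -
  have b: "\<bar>f x * g x\<bar> \<le> (1 * (f x)\<^sup>2 + (g x)\<^sup>2 / 1) / 2" for x
    by (rule amgm2) simp
  show ig: "integrable lborel (\<lambda>x. f x * g x)"
    by (rule Bochner_Integration.integrable_bound[where f="\<lambda>x. (1 * (f x)\<^sup>2 + (g x)\<^sup>2 / 1) / 2"])
       (use i1 i2 b in auto)
  show "integral\<^sup>L lborel (\<lambda>x. \<bar>f x * g x\<bar>) \<le> sqrt (integral\<^sup>L lborel (\<lambda>x. (f x)\<^sup>2)) * sqrt (integral\<^sup>L lborel (\<lambda>x. (g x)\<^sup>2))"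
  proof (rule real_amgm_lim)
    show "integral\<^sup>L lborel (\<lambda>x. (f x)\<^sup>2) \<ge> 0" "integral\<^sup>L lborel (\<lambda>x. (g x)\<^sup>2) \<ge> 0" by auto
    fix e :: real assume e: "e > 0"
    have "integral\<^sup>L lborel (\<lambda>x. \<bar>f x * g x\<bar>) \<le> integral\<^sup>L lborel (\<lambda>x. (e * (f x)\<^sup>2 + (g x)\<^sup>2 / e) / 2)"
    proof (rule integral_mono)
      show "integrable lborel (\<lambda>x. \<bar>f x * g x\<bar>)" using ig by auto
      show "integrable lborel (\<lambda>x. (e * (f x)\<^sup>2 + (g x)\<^sup>2 / e) / 2)" using i1 i2 by auto
      fix x show "\<bar>f x * g x\<bar> \<le> (e * (f x)\<^sup>2 + (g x)\<^sup>2 / e) / 2" using e by (rule amgm2)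
    qed
    also have "\<dots> = integral\<^sup>L lborel (\<lambda>x. (e/2) * (f x)\<^sup>2 + (1/(2*e)) * (g x)\<^sup>2)"
      by (rule arg_cong[where f="integral\<^sup>L lborel"]) (auto simp: fun_eq_iff add_divide_distrib)
    also have "\<dots> = (e/2) * integral\<^sup>L lborel (\<lambda>x. (f x)\<^sup>2) + (1/(2*e)) * integral\<^sup>L lborel (\<lambda>x. (g x)\<^sup>2)"
      by (subst Bochner_Integration.integral_add) (use i1 i2 in auto)
    also have "\<dots> = (e * integral\<^sup>L lborel (\<lambda>x. (f x)\<^sup>2) + integral\<^sup>L lborel (\<lambda>x. (g x)\<^sup>2) / e) / 2"
      by (simp add: add_divide_distrib)
    finally show "integral\<^sup>L lborel (\<lambda>x. \<bar>f x * g x\<bar>) \<le> (e * integral\<^sup>L lborel (\<lambda>x. (f x)\<^sup>2) + integral\<^sup>L lborel (\<lambda>x. (g x)\<^sup>2) / e) / 2" .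
  qed
qed

lemma lborel_shift:
  fixes f :: "real \<Rightarrow> real"
  shows "integral\<^sup>L lborel (\<lambda>x. f (t + x)) = integral\<^sup>L lborel f"
    and "integrable lborel (\<lambda>x. f (t + x)) \<longleftrightarrow> integrable lborel f"
  using lborel_integral_real_affine[where c=1 and t=t and f=f] lborel_integrable_real_affine_iff[where c=1 and t=t and f=f] by simp_all

lemma fub_tri:
  fixes A h :: "real \<Rightarrow> real"
  assumes iA: "integrable lborel A" and ih: "integrable lborel h"
  shows "integrable lborel (\<lambda>s. h s * integral\<^sup>L lborel (\<lambda>u. indicator {..s} u * A u))"
    and "integral\<^sup>L lborel (\<lambda>s. h s * integral\<^sup>L lborel (\<lambda>u. indicator {..s} u * A u))
       = integral\<^sup>L lborel (\<lambda>u. A u * integral\<^sup>L lborel (\<lambda>s. indicator {u..} s * h s))"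
proof -
  define f where "f = (\<lambda>s u::real. h s * (indicator {..s} u * A u))"
  have mA[measurable]: "A \<in> borel_measurable lborel" using iA by auto
  have mh[measurable]: "h \<in> borel_measurable lborel" using ih by auto
  have feq: "case_prod f = (\<lambda>p. h (fst p) * ((if snd p \<le> fst p then 1 else 0) * A (snd p)))"
    by (auto simp: f_def fun_eq_iff split: split_indicator)
  have mf[measurable]: "case_prod f \<in> borel_measurable (lborel \<Otimes>\<^sub>M lborel)"
    unfolding feq by measurable
  have iiA: "integrable lborel (\<lambda>u. indicator {..s} u * A u)" for s
    by (rule Bochner_Integration.integrable_bound[OF iA]) (auto split: split_indicator)
  have iiAabs: "integrable lborel (\<lambda>u. indicator {..s} u * \<bar>A u\<bar>)" for s
    by (rule Bochner_Integration.integrable_bound[OF integrable_abs[OF iA]]) (auto split: split_indicator)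
  have fint: "integrable (lborel \<Otimes>\<^sub>M lborel) (case_prod f)"
  proof (rule lborel_pair.Fubini_integrable[OF mf])
    have m2: "(\<lambda>s. integral\<^sup>L lborel (\<lambda>u. norm (f s u))) \<in> borel_measurable lborel"
      using mf by measurable
    show "integrable lborel (\<lambda>s. integral\<^sup>L lborel (\<lambda>u. norm (case_prod f (s, u))))"
    proof (rule Bochner_Integration.integrable_bound[where f="\<lambda>s. \<bar>h s\<bar> * integral\<^sup>L lborel (\<lambda>u. \<bar>A u\<bar>)"])
      show "integrable lborel (\<lambda>s. \<bar>h s\<bar> * integral\<^sup>L lborel (\<lambda>u. \<bar>A u\<bar>))" using ih by auto
      show "(\<lambda>s. integral\<^sup>L lborel (\<lambda>u. norm (case_prod f (s, u)))) \<in> borel_measurable lborel" using m2 by simp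
      show "AE s in lborel. norm (integral\<^sup>L lborel (\<lambda>u. norm (case_prod f (s, u)))) \<le> norm (\<bar>h s\<bar> * integral\<^sup>L lborel (\<lambda>u. \<bar>A u\<bar>))"
      proof (rule AE_I2)
        fix s
        have e: "integral\<^sup>L lborel (\<lambda>u. norm (f s u)) = \<bar>h s\<bar> * integral\<^sup>L lborel (\<lambda>u. indicator {..s} u * \<bar>A u\<bar>)"
          by (simp add: f_def abs_mult)
        have "integral\<^sup>L lborel (\<lambda>u. indicator {..s} u * \<bar>A u\<bar>) \<le> integral\<^sup>L lborel (\<lambda>u. \<bar>A u\<bar>)"
          by (rule integral_mono[OF iiAabs integrable_abs[OF iA]]) (auto split: split_indicator)
        moreover have "0 \<le> integral\<^sup>L lborel (\<lambda>u. indicator {..s} u * \<bar>A u\<bar>)" by auto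
        ultimately show "norm (integral\<^sup>L lborel (\<lambda>u. norm (case_prod f (s, u)))) \<le> norm (\<bar>h s\<bar> * integral\<^sup>L lborel (\<lambda>u. \<bar>A u\<bar>))"
          using e by (simp add: abs_mult mult_left_mono)
      qed
    qed
    show "AE s in lborel. integrable lborel (\<lambda>u. case_prod f (s, u))"
      using iiA by (simp add: f_def)
  qed
  have e1: "\<And>s. integral\<^sup>L lborel (\<lambda>u. f s u) = h s * integral\<^sup>L lborel (\<lambda>u. indicator {..s} u * A u)"
    by (simp add: f_def)
  have e2: "\<And>u. integral\<^sup>L lborel (\<lambda>s. f s u) = A u * integral\<^sup>L lborel (\<lambda>s. indicator {u..} s * h s)"
  proof -
    fix u
    have "(\<lambda>s. f s u) = (\<lambda>s. A u * (indicator {u..} s * h s))"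
      by (auto simp: f_def fun_eq_iff split: split_indicator)
    then show "integral\<^sup>L lborel (\<lambda>s. f s u) = A u * integral\<^sup>L lborel (\<lambda>s. indicator {u..} s * h s)"
      by simp
  qed
  show "integrable lborel (\<lambda>s. h s * integral\<^sup>L lborel (\<lambda>u. indicator {..s} u * A u))"
    using lborel_pair.integrable_fst'[OF fint] by (simp add: e1)
  show "integral\<^sup>L lborel (\<lambda>s. h s * integral\<^sup>L lborel (\<lambda>u. indicator {..s} u * A u))
       = integral\<^sup>L lborel (\<lambda>u. A u * integral\<^sup>L lborel (\<lambda>s. indicator {u..} s * h s))"
    using lborel_pair.Fubini_integral[of f, OF fint] by (simp add: e1 e2)
qed

lemma L2_int:
  fixes h :: "real \<Rightarrow> real"
  assumes "L2 T h" "T > 0"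
  shows "set_integrable lborel {-T..0} h"
    and "(LBINT s:{-T..0}. \<bar>h s\<bar>) \<le> sqrt T * sqrt (LBINT s:{-T..0}. (h s)\<^sup>2)"
proof -
  let ?f = "\<lambda>x. indicator {-T..0} x * h x"
  let ?g = "\<lambda>x. indicator {-T..0} x :: real"
  have mf: "?f \<in> borel_measurable lborel" using assms(1)
    by (simp add: L2_def set_borel_measurable_def)
  have mg: "?g \<in> borel_measurable lborel" by simp
  have if2: "integrable lborel (\<lambda>x. (?f x)\<^sup>2)"
  proof -
    have "(\<lambda>x. (?f x)\<^sup>2) = (\<lambda>x. indicator {-T..0} x * (h x)\<^sup>2)"
      by (auto simp: fun_eq_iff power2_eq_square split: split_indicator)
    then show ?thesis using assms(1) by (simp add: L2_def set_integrable_def)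
  qed
  have ig2: "integrable lborel (\<lambda>x. (?g x)\<^sup>2)"
  proof -
    have "(\<lambda>x. (?g x)\<^sup>2) = indicator {-T..0}"
      by (auto simp: fun_eq_iff split: split_indicator)
    then show ?thesis by (simp add: emeasure_lborel_Icc_eq)
  qed
  note cs = cs_int[OF mf mg if2 ig2]
  have e1: "(\<lambda>x. ?f x * ?g x) = (\<lambda>x. indicator {-T..0} x * h x)"
    by (auto simp: fun_eq_iff split: split_indicator)
  show "set_integrable lborel {-T..0} h"
    using cs(1) unfolding e1 by (simp add: set_integrable_def)
  have e2: "(\<lambda>x. \<bar>?f x * ?g x\<bar>) = (\<lambda>x. indicator {-T..0} x * \<bar>h x\<bar>)"
    by (auto simp: fun_eq_iff split: split_indicator)
  have e3: "(\<lambda>x. (?f x)\<^sup>2) = (\<lambda>x. indicator {-T..0} x * (h x)\<^sup>2)"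
    by (auto simp: fun_eq_iff power2_eq_square split: split_indicator)
  have e4: "integral\<^sup>L lborel (\<lambda>x. (?g x)\<^sup>2) = T"
  proof -
    have "(\<lambda>x. (?g x)\<^sup>2) = indicator {-T..0}"
      by (auto simp: fun_eq_iff split: split_indicator)
    then show ?thesis using assms(2) by simp
  qed
  show "(LBINT s:{-T..0}. \<bar>h s\<bar>) \<le> sqrt T * sqrt (LBINT s:{-T..0}. (h s)\<^sup>2)"
    using cs(2) unfolding e2 e3 e4 by (simp add: set_lebesgue_integral_def mult.commute)
qed

lemma L2_diff:
  fixes f g :: "real \<Rightarrow> real"
  assumes "L2 T f" "L2 T g"
  shows "L2 T (\<lambda>s. f s - g s)"
proof -
  have mf: "(\<lambda>x. indicator {-T..0} x * f x) \<in> borel_measurable lborel"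
   and mg: "(\<lambda>x. indicator {-T..0} x * g x) \<in> borel_measurable lborel"
    using assms by (simp_all add: L2_def set_borel_measurable_def)
  have m: "(\<lambda>x. indicator {-T..0} x * (f x - g x)) \<in> borel_measurable lborel"
  proof -
    have "(\<lambda>x. indicator {-T..0} x * (f x - g x)) = (\<lambda>x. indicator {-T..0} x * f x - indicator {-T..0} x * g x)"
      by (auto simp: fun_eq_iff algebra_simps)
    then show ?thesis using mf mg by simp
  qed
  have i: "integrable lborel (\<lambda>x. indicator {-T..0} x * (f x - g x)\<^sup>2)"
  proof (rule Bochner_Integration.integrable_bound[where f="\<lambda>x. 2 * (indicator {-T..0} x * (f x)\<^sup>2) + 2 * (indicator {-T..0} x * (g x)\<^sup>2)"])
    show "integrable lborel (\<lambda>x. 2 * (indicator {-T..0} x * (f x)\<^sup>2) + 2 * (indicator {-T..0} x * (g x)\<^sup>2))"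
      using assms by (auto simp: L2_def set_integrable_def)
    have "(\<lambda>x. indicator {-T..0} x * (f x - g x)\<^sup>2) = (\<lambda>x. (indicator {-T..0} x * (f x - g x))\<^sup>2)"
      by (auto simp: fun_eq_iff split: split_indicator)
    then show "(\<lambda>x. indicator {-T..0} x * (f x - g x)\<^sup>2) \<in> borel_measurable lborel" using m by simp
    show "AE x in lborel. norm (indicator {-T..0} x * (f x - g x)\<^sup>2) \<le> norm (2 * (indicator {-T..0} x * (f x)\<^sup>2) + 2 * (indicator {-T..0} x * (g x)\<^sup>2))"
    proof (rule AE_I2)
      fix x
      have "(f x - g x)\<^sup>2 \<le> 2 * (f x)\<^sup>2 + 2 * (g x)\<^sup>2"
        using zero_le_square[of "f x + g x"] by (simp add: power2_eq_square algebra_simps)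
      then show "norm (indicator {-T..0} x * (f x - g x)\<^sup>2) \<le> norm (2 * (indicator {-T..0} x * (f x)\<^sup>2) + 2 * (indicator {-T..0} x * (g x)\<^sup>2))"
        by (auto split: split_indicator)
    qed
  qed
  show ?thesis using m i by (simp add: L2_def set_borel_measurable_def set_integrable_def)
qed

locale setting =
  fixes T r :: real and a a' :: "real \<Rightarrow> real" and f0 :: "real \<times> real \<Rightarrow> real" and L :: real
  assumes T: "T > 0" and r: "r > 0" and a'L2: "L2 T a'"
    and aeq: "\<And>s. s \<in> {-T..0} \<Longrightarrow> a s = (LBINT u:{-T..s}. a' u)"
    and lip: "L-lipschitz_on UNIV f0"
begin

definition "A1 = (LBINT s:{-T..0}. \<bar>a' s\<bar>)"

lemma a'int: "set_integrable lborel {-T..0} a'"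
  using L2_int[OF a'L2 T] by simp

lemma A1_nonneg: "A1 \<ge> 0"
  unfolding A1_def by (simp add: set_lebesgue_integral_def)

lemma L_nonneg: "L \<ge> 0" using lip by (simp add: lipschitz_on_def)

lemma a_lemma:
  fixes h :: "real \<Rightarrow> real"
  assumes ih: "set_integrable lborel {-T..0} h"
  shows "set_integrable lborel {-T..0} (\<lambda>s. a s * h s)"
    and "(LBINT s:{-T..0}. a s * h s) = (LBINT u:{-T..0}. a' u * (LBINT s:{u..0}. h s))"
proof -
  define A where "A = (\<lambda>u. indicator {-T..0} u * a' u)"
  define H where "H = (\<lambda>s. indicator {-T..0} s * h s)"
  have iA: "integrable lborel A" using a'int by (simp add: A_def set_integrable_def)
  have iH: "integrable lborel H" using ih by (simp add: H_def set_integrable_def)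
  note fb = fub_tri[OF iA iH]
  have p1: "H s * integral\<^sup>L lborel (\<lambda>u. indicator {..s} u * A u) = indicator {-T..0} s * (a s * h s)" for s
  proof (cases "s \<in> {-T..0}")
    case True
    have "(\<lambda>u. indicator {..s} u * A u) = (\<lambda>u. indicator {-T..s} u * a' u)"
      using True by (auto simp: A_def fun_eq_iff split: split_indicator)
    then have "integral\<^sup>L lborel (\<lambda>u. indicator {..s} u * A u) = a s"
      using aeq[OF True] by (simp add: set_lebesgue_integral_def)
    then show ?thesis using True by (simp add: H_def)
  next
    case False then show ?thesis by (simp add: H_def)
  qed
  have p2: "A u * integral\<^sup>L lborel (\<lambda>s. indicator {u..} s * H s) = indicator {-T..0} u * (a' u * (LBINT s:{u..0}. h s))" for u
  proof (cases "u \<in> {-T..0}")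
    case True
    have "(\<lambda>s. indicator {u..} s * H s) = (\<lambda>s. indicator {u..0} s * h s)"
      using True by (auto simp: H_def fun_eq_iff split: split_indicator)
    then show ?thesis using True by (simp add: A_def set_lebesgue_integral_def)
  next
    case False then show ?thesis by (simp add: A_def)
  qed
  show "set_integrable lborel {-T..0} (\<lambda>s. a s * h s)"
    using fb(1) unfolding p1 by (simp add: set_integrable_def)
  show "(LBINT s:{-T..0}. a s * h s) = (LBINT u:{-T..0}. a' u * (LBINT s:{u..0}. h s))"
    using fb(2) unfolding p1 p2 by (simp add: set_lebesgue_integral_def)
qed

lemma inner_bound:
  fixes h :: "real \<Rightarrow> real"
  assumes ih: "set_integrable lborel {-T..0} h" and u: "u \<in> {-T..0}"
  shows "\<bar>LBINT s:{u..0}. h s\<bar> \<le> (LBINT s:{-T..0}. \<bar>h s\<bar>)"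
  unfolding set_lebesgue_integral_def real_scaleR_def
proof (rule abs_int_bound)
  show "integrable lborel (\<lambda>x. indicator {-T..0} x * \<bar>h x\<bar>)"
    using integrable_abs[OF ih[unfolded set_integrable_def]]
    by (simp add: abs_mult)
  fix x show "\<bar>indicator {u..0} x * h x\<bar> \<le> indicator {-T..0} x * \<bar>h x\<bar>"
    using u by (auto split: split_indicator)
qed

lemma a_bound:
  fixes h :: "real \<Rightarrow> real"
  assumes ih: "set_integrable lborel {-T..0} h"
  shows "\<bar>LBINT s:{-T..0}. a s * h s\<bar> \<le> A1 * (LBINT s:{-T..0}. \<bar>h s\<bar>)"
proof -
  have "\<bar>LBINT s:{-T..0}. a s * h s\<bar> = \<bar>LBINT u:{-T..0}. a' u * (LBINT s:{u..0}. h s)\<bar>"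
    using a_lemma(2)[OF ih] by simp
  also have "\<dots> \<le> integral\<^sup>L lborel (\<lambda>u. indicator {-T..0} u * \<bar>a' u\<bar> * (LBINT s:{-T..0}. \<bar>h s\<bar>))"
    unfolding set_lebesgue_integral_def[of _ _ "\<lambda>u. a' u * (LBINT s:{u..0}. h s)"] real_scaleR_def
  proof (rule abs_int_bound)
    show "integrable lborel (\<lambda>u. indicator {-T..0} u * \<bar>a' u\<bar> * (LBINT s:{-T..0}. \<bar>h s\<bar>))"
      using integrable_abs[OF a'int[unfolded set_integrable_def]] by (simp add: abs_mult)
    fix u
    show "\<bar>indicator {-T..0} u * (a' u * (LBINT s:{u..0}. h s))\<bar> \<le> indicator {-T..0} u * \<bar>a' u\<bar> * (LBINT s:{-T..0}. \<bar>h s\<bar>)"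
    proof (cases "u \<in> {-T..0}")
      case True
      then show ?thesis using inner_bound[OF ih True]
        by (simp add: abs_mult mult_left_mono)
    qed simp
  qed
  also have "\<dots> = A1 * (LBINT s:{-T..0}. \<bar>h s\<bar>)"
    by (simp add: A1_def set_lebesgue_integral_def abs_mult)
  finally show ?thesis .
qed

lemma fF_lip:
  assumes "in_H T \<xi>" "in_H T \<xi>'"
  shows "\<bar>fF T a f0 \<xi> - fF T a f0 \<xi>'\<bar> \<le> L * (1 + A1 * sqrt T) * hnorm T (hdiff \<xi> \<xi>')"
proof -
  let ?d = "\<lambda>s. snd \<xi> s - snd \<xi>' s"
  have l1: "L2 T (snd \<xi>)" "L2 T (snd \<xi>')" using assms by (auto simp: in_H_def)
  have ld: "L2 T ?d" using L2_diff[OF l1] .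
  have i1: "set_integrable lborel {-T..0} (snd \<xi>)" "set_integrable lborel {-T..0} (snd \<xi>')"
    using L2_int(1)[OF l1(1) T] L2_int(1)[OF l1(2) T] .
  have id: "set_integrable lborel {-T..0} ?d" using L2_int(1)[OF ld T] .
  define I where "I = (LBINT s:{-T..0}. (?d s)\<^sup>2)"
  have I0: "I \<ge> 0" unfolding I_def by (simp add: set_lebesgue_integral_def)
  have hn: "hnorm T (hdiff \<xi> \<xi>') = sqrt ((fst \<xi> - fst \<xi>')\<^sup>2 + I)"
    by (simp add: hnorm_def hdiff_def I_def)
  have b1: "\<bar>fst \<xi> - fst \<xi>'\<bar> \<le> hnorm T (hdiff \<xi> \<xi>')"
  proof -
    have "sqrt ((fst \<xi> - fst \<xi>')\<^sup>2) \<le> sqrt ((fst \<xi> - fst \<xi>')\<^sup>2 + I)"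
      by (rule real_sqrt_le_mono) (use I0 in simp)
    then show ?thesis unfolding hn by simp
  qed
  have b2: "sqrt I \<le> hnorm T (hdiff \<xi> \<xi>')"
    unfolding hn by (simp add: real_sqrt_le_mono)
  have lin: "(LBINT s:{-T..0}. a s * snd \<xi> s) - (LBINT s:{-T..0}. a s * snd \<xi>' s) = (LBINT s:{-T..0}. a s * ?d s)"
    using set_integral_diff(2)[OF a_lemma(1)[OF i1(1)] a_lemma(1)[OF i1(2)]]
    by (simp add: right_diff_distrib)
  have b3: "\<bar>LBINT s:{-T..0}. a s * ?d s\<bar> \<le> A1 * sqrt T * hnorm T (hdiff \<xi> \<xi>')"
  proof -
    have "\<bar>LBINT s:{-T..0}. a s * ?d s\<bar> \<le> A1 * (LBINT s:{-T..0}. \<bar>?d s\<bar>)" by (rule a_bound[OF id])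
    also have "\<dots> \<le> A1 * (sqrt T * sqrt I)"
      using L2_int(2)[OF ld T] A1_nonneg unfolding I_def by (rule mult_left_mono)
    also have "\<dots> \<le> A1 * (sqrt T * hnorm T (hdiff \<xi> \<xi>'))"
      using b2 A1_nonneg T by (simp add: mult_left_mono)
    finally show ?thesis by (simp add: mult.assoc)
  qed
  define P where "P = (fst \<xi>, LBINT s:{-T..0}. a s * snd \<xi> s)"
  define Q where "Q = (fst \<xi>', LBINT s:{-T..0}. a s * snd \<xi>' s)"
  have lipx: "dist (f0 P) (f0 Q) \<le> L * dist P Q" using lip unfolding lipschitz_on_def by blast
  have "\<bar>fF T a f0 \<xi> - fF T a f0 \<xi>'\<bar> = dist (f0 P) (f0 Q)"
    by (simp add: fF_def dist_real_def P_def Q_def)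
  also have "\<dots> \<le> L * dist P Q" by (rule lipx)
  also have "dist P Q = sqrt ((fst \<xi> - fst \<xi>')\<^sup>2 + ((LBINT s:{-T..0}. a s * snd \<xi> s) - (LBINT s:{-T..0}. a s * snd \<xi>' s))\<^sup>2)"
    by (simp add: P_def Q_def dist_Pair_Pair dist_real_def)
  also have "\<dots> \<le> \<bar>fst \<xi> - fst \<xi>'\<bar> + \<bar>(LBINT s:{-T..0}. a s * snd \<xi> s) - (LBINT s:{-T..0}. a s * snd \<xi>' s)\<bar>"
    by (rule sqrt_sum_squares_le_sum_abs)
  finally have "\<bar>fF T a f0 \<xi> - fF T a f0 \<xi>'\<bar> \<le> L * (\<bar>fst \<xi> - fst \<xi>'\<bar> + \<bar>LBINT s:{-T..0}. a s * ?d s\<bar>)"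
    using L_nonneg unfolding lin by (simp add: mult_left_mono)
  also have "\<dots> \<le> L * (hnorm T (hdiff \<xi> \<xi>') + A1 * sqrt T * hnorm T (hdiff \<xi> \<xi>'))"
    using b1 b3 L_nonneg by (intro mult_left_mono add_mono) auto
  finally show ?thesis by (simp add: algebra_simps)
qed

end

context setting begin

lemma fF_lip2:
  assumes "in_H T \<xi>" "in_H T \<xi>'"
  shows "\<bar>fF T a f0 \<xi> - fF T a f0 \<xi>'\<bar> \<le> L * (\<bar>fst \<xi> - fst \<xi>'\<bar> + \<bar>LBINT s:{-T..0}. a s * (snd \<xi> s - snd \<xi>' s)\<bar>)"
proof -
  have l1: "L2 T (snd \<xi>)" "L2 T (snd \<xi>')" using assms by (auto simp: in_H_def)
  have i1: "set_integrable lborel {-T..0} (snd \<xi>)" "set_integrable lborel {-T..0} (snd \<xi>')"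
    using L2_int(1)[OF l1(1) T] L2_int(1)[OF l1(2) T] .
  have lin: "(LBINT s:{-T..0}. a s * snd \<xi> s) - (LBINT s:{-T..0}. a s * snd \<xi>' s) = (LBINT s:{-T..0}. a s * (snd \<xi> s - snd \<xi>' s))"
    using set_integral_diff(2)[OF a_lemma(1)[OF i1(1)] a_lemma(1)[OF i1(2)]]
    by (simp add: right_diff_distrib)
  define P where "P = (fst \<xi>, LBINT s:{-T..0}. a s * snd \<xi> s)"
  define Q where "Q = (fst \<xi>', LBINT s:{-T..0}. a s * snd \<xi>' s)"
  have lipx: "dist (f0 P) (f0 Q) \<le> L * dist P Q" using lip unfolding lipschitz_on_def by blast
  have "\<bar>fF T a f0 \<xi> - fF T a f0 \<xi>'\<bar> = dist (f0 P) (f0 Q)"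
    by (simp add: fF_def dist_real_def P_def Q_def)
  also have "\<dots> \<le> L * dist P Q" by (rule lipx)
  also have "dist P Q = sqrt ((fst \<xi> - fst \<xi>')\<^sup>2 + ((LBINT s:{-T..0}. a s * snd \<xi> s) - (LBINT s:{-T..0}. a s * snd \<xi>' s))\<^sup>2)"
    by (simp add: P_def Q_def dist_Pair_Pair dist_real_def)
  also have "\<dots> \<le> \<bar>fst \<xi> - fst \<xi>'\<bar> + \<bar>(LBINT s:{-T..0}. a s * snd \<xi> s) - (LBINT s:{-T..0}. a s * snd \<xi>' s)\<bar>"
    by (rule sqrt_sum_squares_le_sum_abs)
  finally show ?thesis using L_nonneg unfolding lin by (simp add: mult_left_mono)
qed

lemma mild_facts:
  assumes H: "in_H T \<eta>" and ms: "mild_sol T r a f0 (\<lambda>_. 0) \<eta> X"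
  shows "\<And>t. t \<ge> 0 \<Longrightarrow> in_H T (X t)"
    and "continuous_on {0..} (\<lambda>\<tau>. fF T a f0 (X \<tau>))"
    and "continuous_on {0..} (\<lambda>\<tau>. fst (X \<tau>))"
    and "\<And>t. t \<ge> 0 \<Longrightarrow> fst (X t) = fst \<eta> * exp (r*t) + (LBINT \<tau>:{0..t}. fF T a f0 (X \<tau>) * exp (r*(t-\<tau>)))"
    and "\<And>t. t \<ge> 0 \<Longrightarrow> AE s in lborel. s \<in> {-T..0} \<longrightarrow> s \<noteq> -t \<longrightarrow>
            snd (X t) s = (if t + s < 0 then snd \<eta> (t+s) else fst (X (t+s)))"
proof -
  have inH: "\<And>t. t \<ge> 0 \<Longrightarrow> in_H T (X t)" using ms by (simp add: mild_sol_def)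
  then show "\<And>t. t \<ge> 0 \<Longrightarrow> in_H T (X t)" .
  have cont: "\<And>t. t \<ge> 0 \<Longrightarrow> ((\<lambda>\<tau>. hnorm T (hdiff (X \<tau>) (X t))) \<longlongrightarrow> 0) (at t within {0..})"
    using ms by (simp add: mild_sol_def)
  have heq: "\<And>t. t \<ge> 0 \<Longrightarrow> heq T (X t) (mild_rhs T r a f0 (\<lambda>_. 0) \<eta> X t)"
    using ms by (simp add: mild_sol_def)
  have fstb: "\<bar>fst (X \<tau>) - fst (X t)\<bar> \<le> hnorm T (hdiff (X \<tau>) (X t))" for \<tau> t
  proof -
    have I0: "(LBINT s:{-T..0}. (snd (X \<tau>) s - snd (X t) s)\<^sup>2) \<ge> 0"
      by (simp add: set_lebesgue_integral_def)
    have "sqrt ((fst (X \<tau>) - fst (X t))\<^sup>2) \<le> hnorm T (hdiff (X \<tau>) (X t))"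
      unfolding hnorm_def hdiff_def by (rule real_sqrt_le_mono) (use I0 in simp)
    then show ?thesis by simp
  qed
  define Kc where "Kc = L * (1 + A1 * sqrt T)"
  show "continuous_on {0..} (\<lambda>\<tau>. fF T a f0 (X \<tau>))"
    unfolding continuous_on_def
  proof (intro ballI)
    fix t :: real assume t: "t \<in> {0..}"
    have "((\<lambda>\<tau>. fF T a f0 (X \<tau>) - fF T a f0 (X t)) \<longlongrightarrow> 0) (at t within {0..})"
    proof (rule Lim_null_comparison)
      show "\<forall>\<^sub>F \<tau> in at t within {0..}. norm (fF T a f0 (X \<tau>) - fF T a f0 (X t)) \<le> Kc * hnorm T (hdiff (X \<tau>) (X t))"
        unfolding eventually_at_filter
        by (rule always_eventually) (use t inH fF_lip in \<open>auto simp: Kc_def\<close>)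
      show "((\<lambda>\<tau>. Kc * hnorm T (hdiff (X \<tau>) (X t))) \<longlongrightarrow> 0) (at t within {0..})"
        using tendsto_mult_right_zero[OF cont[of t]] t by simp
    qed
    then show "((\<lambda>\<tau>. fF T a f0 (X \<tau>)) \<longlongrightarrow> fF T a f0 (X t)) (at t within {0..})"
      by (rule LIM_zero_cancel)
  qed
  show "continuous_on {0..} (\<lambda>\<tau>. fst (X \<tau>))"
    unfolding continuous_on_def
  proof (intro ballI)
    fix t :: real assume t: "t \<in> {0..}"
    have "((\<lambda>\<tau>. fst (X \<tau>) - fst (X t)) \<longlongrightarrow> 0) (at t within {0..})"
    proof (rule Lim_null_comparison)
      show "\<forall>\<^sub>F \<tau> in at t within {0..}. norm (fst (X \<tau>) - fst (X t)) \<le> hnorm T (hdiff (X \<tau>) (X t))"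
        by (rule always_eventually) (use fstb in auto)
      show "((\<lambda>\<tau>. hnorm T (hdiff (X \<tau>) (X t))) \<longlongrightarrow> 0) (at t within {0..})"
        using cont t by simp
    qed
    then show "((\<lambda>\<tau>. fst (X \<tau>)) \<longlongrightarrow> fst (X t)) (at t within {0..})"
      by (rule LIM_zero_cancel)
  qed
  have fsteq: "fst (X t) = fst \<eta> * exp (r*t) + (LBINT \<tau>:{0..t}. fF T a f0 (X \<tau>) * exp (r*(t-\<tau>)))"
    if t: "t \<ge> 0" for t
    using heq[OF t] by (simp add: heq_def mild_rhs_def Ssg_def FF_def set_lebesgue_integral_def)
  then show "\<And>t. t \<ge> 0 \<Longrightarrow> fst (X t) = fst \<eta> * exp (r*t) + (LBINT \<tau>:{0..t}. fF T a f0 (X \<tau>) * exp (r*(t-\<tau>)))" .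
  show "AE s in lborel. s \<in> {-T..0} \<longrightarrow> s \<noteq> -t \<longrightarrow>
            snd (X t) s = (if t + s < 0 then snd \<eta> (t+s) else fst (X (t+s)))" if t: "t \<ge> 0" for t
  proof -
    have ae: "AE s in lborel. s \<in> {-T..0} \<longrightarrow> snd (X t) s = snd (mild_rhs T r a f0 (\<lambda>_. 0) \<eta> X t) s"
      using heq[OF t] by (simp add: heq_def)
    have pt: "snd (mild_rhs T r a f0 (\<lambda>_. 0) \<eta> X t) s = (if t + s < 0 then snd \<eta> (t+s) else fst (X (t+s)))"
      if s: "s \<in> {-T..0}" "s \<noteq> -t" for s
    proof -
      have e0: "snd (mild_rhs T r a f0 (\<lambda>_. 0) \<eta> X t) s =
          indicator {-T..0} (t+s) * snd \<eta> (t+s) + indicator {0..} (t+s) * fst \<eta> * exp (r*(t+s))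
          + integral\<^sup>L lborel (\<lambda>\<tau>. indicator {0..t} \<tau> * (indicator {0..} (t - \<tau> + s) * fF T a f0 (X \<tau>) * exp (r*(t - \<tau> + s))))"
        by (simp add: mild_rhs_def Ssg_def FF_def set_lebesgue_integral_def)
      show ?thesis
      proof (cases "t + s < 0")
        case True
        have "(\<lambda>\<tau>. indicator {0..t} \<tau> * (indicator {0..} (t - \<tau> + s) * fF T a f0 (X \<tau>) * exp (r*(t - \<tau> + s)))) = (\<lambda>_. 0)"
          using True by (auto simp: fun_eq_iff split: split_indicator)
        then show ?thesis using True s t unfolding e0 by (simp split: split_indicator)
      next
        case False
        then have ts: "t + s > 0" using s by auto
        have "(\<lambda>\<tau>. indicator {0..t} \<tau> * (indicator {0..} (t - \<tau> + s) * fF T a f0 (X \<tau>) * exp (r*(t - \<tau> + s))))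
            = (\<lambda>\<tau>. indicator {0..t+s} \<tau> * (fF T a f0 (X \<tau>) * exp (r*(t + s - \<tau>))))"
          using ts s by (auto simp: fun_eq_iff split: split_indicator)
        then show ?thesis using False ts fsteq[of "t+s"] unfolding e0
          by (simp add: set_lebesgue_integral_def split: split_indicator)
      qed
    qed
    show ?thesis using ae by eventually_elim (use pt in auto)
  qed
qed

end

lemma meas_tail_int:
  fixes h :: "real \<Rightarrow> real"
  assumes "integrable lborel h"
  shows "(\<lambda>\<theta>. integral\<^sup>L lborel (\<lambda>v. indicator {\<theta>..0} v * h v)) \<in> borel_measurable lborel"
proof -
  have mh[measurable]: "h \<in> borel_measurable lborel" using assms by auto
  have e: "(\<lambda>(\<theta>, v). indicator {\<theta>..0} v * h v) = (\<lambda>p. (if fst p \<le> snd p \<and> snd p \<le> 0 then 1 else 0) * h (snd p))"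
    by (auto simp: fun_eq_iff split: split_indicator)
  have [measurable]: "(\<lambda>(\<theta>::real, v::real). indicator {\<theta>..0} v * h v) \<in> borel_measurable (lborel \<Otimes>\<^sub>M lborel)"
    unfolding e by measurable
  show ?thesis by measurable
qed

locale sol = setting +
  fixes \<eta> \<eta>b :: hval and X Xb :: "real \<Rightarrow> hval"
  assumes H\<eta>: "in_H T \<eta>" and H\<eta>b: "in_H T \<eta>b"
    and mX: "mild_sol T r a f0 (\<lambda>_. 0) \<eta> X" and mXb: "mild_sol T r a f0 (\<lambda>_. 0) \<eta>b Xb"
begin

definition "z0 = fst \<eta> - fst \<eta>b"
definition "z1 = (\<lambda>s. snd \<eta> s - snd \<eta>b s)"
definition "D0 = (\<lambda>t. fst (X t) - fst (Xb t))"
definition "D1 = (\<lambda>t s. snd (X t) s - snd (Xb t) s)"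
definition "g = (\<lambda>\<tau>. fF T a f0 (X \<tau>) - fF T a f0 (Xb \<tau>))"
definition "Z1 = (\<lambda>\<theta>. LBINT v:{\<theta>..0}. z1 v)"
definition "phi = (\<lambda>\<theta>. z0 / r - Z1 \<theta>)"
definition "nn = norm_m1 T r (hdiff \<eta> \<eta>b)"

lemma z1L2: "L2 T z1"
  unfolding z1_def using L2_diff H\<eta> H\<eta>b by (simp add: in_H_def)

lemma z1int: "set_integrable lborel {-T..0} z1"
  using L2_int(1)[OF z1L2 T] .

lemma D1L2: "t \<ge> 0 \<Longrightarrow> L2 T (D1 t)"
  unfolding D1_def using L2_diff mild_facts(1)[OF H\<eta> mX] mild_facts(1)[OF H\<eta>b mXb]
  by (simp add: in_H_def)

lemma D1int: "t \<ge> 0 \<Longrightarrow> set_integrable lborel {-T..0} (D1 t)"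
  using L2_int(1)[OF D1L2 T] .

lemma D0cont: "continuous_on {0..} D0"
  unfolding D0_def by (rule continuous_on_diff[OF mild_facts(3)[OF H\<eta> mX] mild_facts(3)[OF H\<eta>b mXb]])

lemma gcont: "continuous_on {0..} g"
  unfolding g_def using mild_facts(2)[OF H\<eta> mX] mild_facts(2)[OF H\<eta>b mXb]
  by (intro continuous_intros)

lemma D0eq:
  assumes t: "t \<ge> 0"
  shows "D0 t = z0 * exp (r*t) + (LBINT \<tau>:{0..t}. g \<tau> * exp (r*(t-\<tau>)))"
proof -
  have ci: "set_integrable lborel {0..t} (\<lambda>\<tau>. fF T a f0 (Y \<tau>) * exp (r*(t-\<tau>)))"
    if "continuous_on {0..} (\<lambda>\<tau>. fF T a f0 (Y \<tau>))" for Y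
  proof (rule borel_integrable_atLeastAtMost')
    have "continuous_on {0..t} (\<lambda>\<tau>. fF T a f0 (Y \<tau>))"
      by (rule continuous_on_subset[OF that]) auto
    then show "continuous_on {0..t} (\<lambda>\<tau>. fF T a f0 (Y \<tau>) * exp (r*(t-\<tau>)))"
      by (intro continuous_intros)
  qed
  note i1 = ci[OF mild_facts(2)[OF H\<eta> mX]] and i2 = ci[OF mild_facts(2)[OF H\<eta>b mXb]]
  have "D0 t = (fst \<eta> * exp (r*t) + (LBINT \<tau>:{0..t}. fF T a f0 (X \<tau>) * exp (r*(t-\<tau>))))
       - (fst \<eta>b * exp (r*t) + (LBINT \<tau>:{0..t}. fF T a f0 (Xb \<tau>) * exp (r*(t-\<tau>))))"
    unfolding D0_def using mild_facts(4)[OF H\<eta> mX t] mild_facts(4)[OF H\<eta>b mXb t] by simp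
  also have "\<dots> = z0 * exp (r*t) + ((LBINT \<tau>:{0..t}. fF T a f0 (X \<tau>) * exp (r*(t-\<tau>))) - (LBINT \<tau>:{0..t}. fF T a f0 (Xb \<tau>) * exp (r*(t-\<tau>))))"
    by (simp add: z0_def algebra_simps)
  also have "(LBINT \<tau>:{0..t}. fF T a f0 (X \<tau>) * exp (r*(t-\<tau>))) - (LBINT \<tau>:{0..t}. fF T a f0 (Xb \<tau>) * exp (r*(t-\<tau>)))
      = (LBINT \<tau>:{0..t}. g \<tau> * exp (r*(t-\<tau>)))"
    using set_integral_diff(2)[OF i1 i2] by (simp add: g_def left_diff_distrib)
  finally show ?thesis .
qed

lemma D1ae:
  assumes t: "t \<ge> 0"
  shows "AE s in lborel. s \<in> {-T..0} \<longrightarrow> s \<noteq> -t \<longrightarrow> D1 t s = (if t + s < 0 then z1 (t+s) else D0 (t+s))"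
  using mild_facts(5)[OF H\<eta> mX t] mild_facts(5)[OF H\<eta>b mXb t]
  by eventually_elim (auto simp: D1_def z1_def D0_def)

lemma nn_eq: "nn = sqrt ((z0/r)\<^sup>2 + (LBINT \<theta>:{-T..0}. (phi \<theta>)\<^sup>2))"
  by (simp add: nn_def norm_m1_def hnorm_def Ainv_def hdiff_def phi_def Z1_def z0_def z1_def)

lemma phi2_nonneg: "(LBINT \<theta>:{-T..0}. (phi \<theta>)\<^sup>2) \<ge> 0"
  by (simp add: set_lebesgue_integral_def)

lemma nn_nonneg: "nn \<ge> 0" unfolding nn_eq using phi2_nonneg by simp

lemma z0_le: "\<bar>z0\<bar> / r \<le> nn"
proof -
  have "sqrt ((z0/r)\<^sup>2) \<le> nn" unfolding nn_eq
    by (rule real_sqrt_le_mono) (use phi2_nonneg in simp)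
  then show ?thesis using r by simp
qed

lemma z0_le': "\<bar>z0\<bar> \<le> r * nn"
  using z0_le r by (simp add: divide_le_eq mult.commute)

lemma phi2_le: "(LBINT \<theta>:{-T..0}. (phi \<theta>)\<^sup>2) \<le> nn\<^sup>2"
  unfolding nn_eq using phi2_nonneg by simp

lemma phi_meas: "(\<lambda>\<theta>. indicator {-T..0} \<theta> * phi \<theta>) \<in> borel_measurable lborel"
proof -
  have ih: "integrable lborel (\<lambda>v. indicator {-T..0} v * z1 v)"
    using z1int by (simp add: set_integrable_def)
  have m: "(\<lambda>\<theta>. integral\<^sup>L lborel (\<lambda>v. indicator {\<theta>..0} v * (indicator {-T..0} v * z1 v))) \<in> borel_measurable lborel"
    by (rule meas_tail_int[OF ih])
  have e: "(\<lambda>\<theta>. indicator {-T..0} \<theta> * phi \<theta>) = (\<lambda>\<theta>. indicator {-T..0} \<theta> * (z0 / r - integral\<^sup>L lborel (\<lambda>v. indicator {\<theta>..0} v * (indicator {-T..0} v * z1 v))))"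
  proof (rule ext)
    fix \<theta>
    show "indicator {-T..0} \<theta> * phi \<theta> = indicator {-T..0} \<theta> * (z0 / r - integral\<^sup>L lborel (\<lambda>v. indicator {\<theta>..0} v * (indicator {-T..0} v * z1 v)))"
    proof (cases "\<theta> \<in> {-T..0}")
      case True
      have "(\<lambda>v. indicator {\<theta>..0} v * (indicator {-T..0} v * z1 v)) = (\<lambda>v. indicator {\<theta>..0} v * z1 v)"
        using True by (auto simp: fun_eq_iff split: split_indicator)
      then show ?thesis by (simp add: phi_def Z1_def set_lebesgue_integral_def)
    qed simp
  qed
  show ?thesis unfolding e using m by measurable
qed

lemma phi_bound: "\<theta> \<in> {-T..0} \<Longrightarrow> \<bar>phi \<theta>\<bar> \<le> \<bar>z0\<bar> / r + (LBINT s:{-T..0}. \<bar>z1 s\<bar>)"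
proof -
  assume th: "\<theta> \<in> {-T..0}"
  have b: "\<bar>Z1 \<theta>\<bar> \<le> (LBINT s:{-T..0}. \<bar>z1 s\<bar>)" using inner_bound[OF z1int th] by (simp add: Z1_def)
  have "\<bar>phi \<theta>\<bar> \<le> \<bar>z0 / r\<bar> + \<bar>Z1 \<theta>\<bar>" unfolding phi_def by (rule abs_triangle_ineq4)
  also have "\<bar>z0 / r\<bar> = \<bar>z0\<bar> / r" using r by simp
  finally show ?thesis using b by linarith
qed

lemma phi2_int: "integrable lborel (\<lambda>\<theta>. indicator {-T..0} \<theta> * (phi \<theta>)\<^sup>2)"
proof -
  define c where "c = \<bar>z0\<bar> / r + (LBINT s:{-T..0}. \<bar>z1 s\<bar>)"
  show ?thesis
  proof (rule Bochner_Integration.integrable_bound[where f="\<lambda>\<theta>. indicator {-T..0} \<theta> * c\<^sup>2"])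
    show "integrable lborel (\<lambda>\<theta>. indicator {-T..0} \<theta> * c\<^sup>2)"
      by (simp add: emeasure_lborel_Icc_eq)
    have "(\<lambda>\<theta>. indicator {-T..0} \<theta> * (phi \<theta>)\<^sup>2) = (\<lambda>\<theta>. (indicator {-T..0} \<theta> * phi \<theta>)\<^sup>2)"
      by (auto simp: fun_eq_iff split: split_indicator)
    then show "(\<lambda>\<theta>. indicator {-T..0} \<theta> * (phi \<theta>)\<^sup>2) \<in> borel_measurable lborel"
      using phi_meas by simp
    show "AE x in lborel. norm (indicator {-T..0} x * (phi x)\<^sup>2) \<le> norm (indicator {-T..0} x * c\<^sup>2)"
    proof (rule AE_I2)
      fix x show "norm (indicator {-T..0} x * (phi x)\<^sup>2) \<le> norm (indicator {-T..0} x * c\<^sup>2)"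
      proof (cases "x \<in> {-T..0}")
        case True
        have "\<bar>phi x\<bar> \<le> c" using phi_bound[OF True] by (simp add: c_def)
        then have "(phi x)\<^sup>2 \<le> c\<^sup>2" by (metis abs_ge_zero order_trans power2_abs power_mono)
        then show ?thesis using True by simp
      qed simp
    qed
  qed
qed

end

lemma exp_int:
  fixes lam t :: real
  assumes lam: "lam > 0" and t: "t \<ge> 0"
  shows "(LBINT \<theta>:{0..t}. exp (lam * \<theta>)) = (exp (lam * t) - 1) / lam"
proof -
  have "integral\<^sup>L lborel (\<lambda>x. indicator {0..t} x *\<^sub>R exp (lam * x)) = exp (lam * t) / lam - exp (lam * 0) / lam"
  proof (rule integral_FTC_atLeastAtMost[OF t])
    fix x :: real
    have "((\<lambda>x. exp (lam * x) / lam) has_real_derivative exp (lam * x)) (at x within {0..t})"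
      using lam by (auto intro!: derivative_eq_intros)
    then show "((\<lambda>x. exp (lam * x) / lam) has_vector_derivative exp (lam * x)) (at x within {0..t})"
      by (simp add: has_real_derivative_iff_has_vector_derivative)
  next
    show "continuous_on {0..t} (\<lambda>x. exp (lam * x))" by (intro continuous_intros)
  qed
  then show ?thesis by (simp add: set_lebesgue_integral_def diff_divide_distrib)
qed

context sol begin

lemma W_lemma:
  assumes t: "t \<in> {0..T}" and s: "s \<in> {-T..0}"
  shows "(LBINT u:{s..0}. D1 t u) = (if t + s < 0 then Z1 (t+s) else 0) + (LBINT \<theta>:{max (t+s) 0..t}. D0 \<theta>)"
proof -
  define P where "P = (\<lambda>u. if t + s < 0 then indicator {t+s..0} (t+u) * z1 (t+u) else 0)"
  define Q where "Q = (\<lambda>u. indicator {max (t+s) 0..t} (t+u) * D0 (t+u))"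
  have t0: "t \<ge> 0" using t by simp
  have iz: "integrable lborel (\<lambda>\<theta>. indicator {t+s..0} \<theta> * z1 \<theta>)"
  proof -
    have "set_integrable lborel {t+s..0} z1"
      by (rule set_integrable_subset[OF z1int]) (use t s in auto)
    then show ?thesis by (simp add: set_integrable_def)
  qed
  have iP: "integrable lborel P"
    using iz lborel_shift(2)[of "\<lambda>\<theta>. indicator {t+s..0} \<theta> * z1 \<theta>" t] by (cases "t+s<0") (simp_all add: P_def)
  have iD: "integrable lborel (\<lambda>\<theta>. indicator {max (t+s) 0..t} \<theta> * D0 \<theta>)"
  proof -
    have "set_integrable lborel {max (t+s) 0..t} D0"
      by (rule borel_integrable_atLeastAtMost', rule continuous_on_subset[OF D0cont]) auto
    then show ?thesis by (simp add: set_integrable_def)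
  qed
  have iQ: "integrable lborel Q"
    using iD lborel_shift(2)[of "\<lambda>\<theta>. indicator {max (t+s) 0..t} \<theta> * D0 \<theta>" t] by (simp add: Q_def)
  have intP: "integral\<^sup>L lborel P = (if t + s < 0 then Z1 (t+s) else 0)"
    using lborel_shift(1)[of "\<lambda>\<theta>. indicator {t+s..0} \<theta> * z1 \<theta>" t]
    by (simp add: P_def Z1_def set_lebesgue_integral_def)
  have intQ: "integral\<^sup>L lborel Q = (LBINT \<theta>:{max (t+s) 0..t}. D0 \<theta>)"
    using lborel_shift(1)[of "\<lambda>\<theta>. indicator {max (t+s) 0..t} \<theta> * D0 \<theta>" t]
    by (simp add: Q_def set_lebesgue_integral_def)
  have iL: "integrable lborel (\<lambda>u. indicator {s..0} u * D1 t u)"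
  proof -
    have "set_integrable lborel {s..0} (D1 t)"
      by (rule set_integrable_subset[OF D1int[OF t0]]) (use s in auto)
    then show ?thesis by (simp add: set_integrable_def)
  qed
  have ae: "AE u in lborel. indicator {s..0} u * D1 t u = P u + Q u"
    using D1ae[OF t0] AE_lborel_singleton[of "-t"]
  proof eventually_elim
    case (elim u)
    show ?case
    proof (cases "u \<in> {s..0}")
      case True
      then have uT: "u \<in> {-T..0}" using s by auto
      have D: "D1 t u = (if t + u < 0 then z1 (t+u) else D0 (t+u))" using elim uT by auto
      show ?thesis
      proof (cases "t + u < 0")
        case True
        then show ?thesis using D \<open>u \<in> {s..0}\<close> t
          by (auto simp: P_def Q_def split: split_indicator)
      next
        case False
        then have "t + u > 0" using elim by auto
        then show ?thesis using D \<open>u \<in> {s..0}\<close> t False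
          by (auto simp: P_def Q_def split: split_indicator)
      qed
    next
      case False
      then show ?thesis using t s by (auto simp: P_def Q_def split: split_indicator)
    qed
  qed
  have "(LBINT u:{s..0}. D1 t u) = integral\<^sup>L lborel (\<lambda>u. P u + Q u)"
    unfolding set_lebesgue_integral_def real_scaleR_def
    by (rule integral_cong_AE) (use iL iP iQ ae in auto)
  also have "\<dots> = integral\<^sup>L lborel P + integral\<^sup>L lborel Q"
    by (rule Bochner_Integration.integral_add[OF iP iQ])
  finally show ?thesis unfolding intP intQ .
qed

lemma Q_bound:
  assumes t: "t \<in> {0..T}" and bc: "continuous_on {0..T} b" and bb: "\<And>\<theta>. \<theta> \<in> {0..T} \<Longrightarrow> \<bar>D0 \<theta>\<bar> \<le> b \<theta>"
  shows "\<bar>LBINT \<theta>:{max c 0..t}. D0 \<theta>\<bar> \<le> (LBINT \<theta>:{0..t}. b \<theta>)"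
  unfolding set_lebesgue_integral_def real_scaleR_def
proof (rule abs_int_bound)
  have "set_integrable lborel {0..t} b"
    by (rule borel_integrable_atLeastAtMost', rule continuous_on_subset[OF bc]) (use t in auto)
  then show "integrable lborel (\<lambda>x. indicator {0..t} x * b x)" by (simp add: set_integrable_def)
  fix x show "\<bar>indicator {max c 0..t} x * D0 x\<bar> \<le> indicator {0..t} x * b x"
  proof (cases "x \<in> {0..t}")
    case True
    then have "\<bar>D0 x\<bar> \<le> b x" using bb t by auto
    then show ?thesis using True by (auto split: split_indicator)
  qed (auto split: split_indicator)
qed

end

context setting begin

definition "A2 = (LBINT s:{-T..0}. (a' s)\<^sup>2)"
definition "lam = max 1 (2 * exp (r*T) * L * (1 + A1))"
definition "c2 = L * (A1 + sqrt A2)"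
definition "K0 = 2 * exp (r*T) * (r + c2 * T)"
definition "KK = K0 * exp (lam * T)"
definition "CC = sqrt ((KK/r)\<^sup>2 + 2 * T * (KK/r + T*KK + 1)\<^sup>2 + 2) + KK/r + 1"

lemma A2_nonneg: "A2 \<ge> 0" unfolding A2_def by (simp add: set_lebesgue_integral_def)
lemma lam_ge1: "lam \<ge> 1" unfolding lam_def by simp
lemma c2_nonneg: "c2 \<ge> 0" unfolding c2_def using L_nonneg A1_nonneg A2_nonneg by simp
lemma K0_nonneg: "K0 \<ge> 0" unfolding K0_def using c2_nonneg r T by simp
lemma KK_nonneg: "KK \<ge> 0" unfolding KK_def using K0_nonneg by simp
lemma CC_pos: "CC > 0"
proof -
  have "0 \<le> (KK/r)\<^sup>2 + 2 * T * (KK/r + T*KK + 1)\<^sup>2 + 2" using T by simp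
  then have "0 \<le> sqrt ((KK/r)\<^sup>2 + 2 * T * (KK/r + T*KK + 1)\<^sup>2 + 2)" by simp
  moreover have "0 \<le> KK/r" using KK_nonneg r by simp
  ultimately show ?thesis unfolding CC_def by linarith
qed

end

context sol begin

lemma g_bound:
  assumes tau: "\<tau> \<in> {0..T}" and bc: "continuous_on {0..T} b" and bb: "\<And>\<theta>. \<theta> \<in> {0..T} \<Longrightarrow> \<bar>D0 \<theta>\<bar> \<le> b \<theta>"
  shows "\<bar>g \<tau>\<bar> \<le> L * (\<bar>D0 \<tau>\<bar> + (A1 * ((LBINT \<theta>:{0..\<tau>}. b \<theta>) + nn) + sqrt A2 * nn))"
proof -
  have t0: "\<tau> \<ge> 0" using tau by simp
  define Bi where "Bi = (LBINT \<theta>:{0..\<tau>}. b \<theta>)"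
  define V where "V = (\<lambda>u. LBINT s:{u..0}. D1 \<tau> s)"
  define G where "G = (\<lambda>u. indicator {-T..0} (\<tau>+u) * phi (\<tau>+u))"
  define f where "f = (\<lambda>u. indicator {-T..0} u * a' u)"
  have gb1: "\<bar>g \<tau>\<bar> \<le> L * (\<bar>D0 \<tau>\<bar> + \<bar>LBINT s:{-T..0}. a s * D1 \<tau> s\<bar>)"
    using fF_lip2[OF mild_facts(1)[OF H\<eta> mX t0] mild_facts(1)[OF H\<eta>b mXb t0]]
    by (simp add: g_def D0_def D1_def)
  have e1: "(LBINT s:{-T..0}. a s * D1 \<tau> s) = integral\<^sup>L lborel (\<lambda>u. indicator {-T..0} u * (a' u * V u))"
    using a_lemma(2)[OF D1int[OF t0]] by (simp add: V_def set_lebesgue_integral_def)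
  have Vb: "\<bar>V u\<bar> \<le> Bi + nn + \<bar>G u\<bar>" if u: "u \<in> {-T..0}" for u
  proof -
    have W: "V u = (if \<tau> + u < 0 then Z1 (\<tau>+u) else 0) + (LBINT \<theta>:{max (\<tau>+u) 0..\<tau>}. D0 \<theta>)"
      unfolding V_def by (rule W_lemma[OF tau u])
    have Qb: "\<bar>LBINT \<theta>:{max (\<tau>+u) 0..\<tau>}. D0 \<theta>\<bar> \<le> Bi"
      unfolding Bi_def by (rule Q_bound[OF tau bc bb])
    have Pb: "\<bar>if \<tau> + u < 0 then Z1 (\<tau>+u) else 0\<bar> \<le> nn + \<bar>G u\<bar>"
    proof (cases "\<tau> + u < 0")
      case True
      then have "\<tau> + u \<in> {-T..0}" using u t0 by auto
      then have Gu: "G u = phi (\<tau>+u)" by (simp add: G_def)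
      have "Z1 (\<tau>+u) = z0 / r - phi (\<tau>+u)" by (simp add: phi_def)
      then have "\<bar>Z1 (\<tau>+u)\<bar> \<le> \<bar>z0 / r\<bar> + \<bar>phi (\<tau>+u)\<bar>" by (metis abs_triangle_ineq4)
      also have "\<bar>z0 / r\<bar> = \<bar>z0\<bar> / r" using r by simp
      finally show ?thesis using True Gu z0_le by simp
    qed (use nn_nonneg in simp)
    show ?thesis using W Qb Pb by (smt (verit, best) abs_triangle_ineq)
  qed
  have mf: "f \<in> borel_measurable lborel" using a'L2 by (simp add: f_def L2_def set_borel_measurable_def)
  have mG: "G \<in> borel_measurable lborel"
  proof -
    have "(\<lambda>u. (\<lambda>\<theta>. indicator {-T..0} \<theta> * phi \<theta>) (\<tau> + u)) \<in> borel_measurable lborel"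
      using phi_meas by measurable
    then show ?thesis by (simp add: G_def)
  qed
  have if2: "integrable lborel (\<lambda>u. (f u)\<^sup>2)"
  proof -
    have "(\<lambda>u. (f u)\<^sup>2) = (\<lambda>u. indicator {-T..0} u * (a' u)\<^sup>2)"
      by (auto simp: fun_eq_iff f_def power2_eq_square split: split_indicator)
    then show ?thesis using a'L2 by (simp add: L2_def set_integrable_def)
  qed
  have G2e: "(\<lambda>u. (G u)\<^sup>2) = (\<lambda>u. (\<lambda>\<theta>. indicator {-T..0} \<theta> * (phi \<theta>)\<^sup>2) (\<tau> + u))"
    by (auto simp: fun_eq_iff G_def power2_eq_square split: split_indicator)
  have iG2: "integrable lborel (\<lambda>u. (G u)\<^sup>2)"
    unfolding G2e using phi2_int lborel_shift(2)[of "\<lambda>\<theta>. indicator {-T..0} \<theta> * (phi \<theta>)\<^sup>2" \<tau>] by simp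
  have intG2: "integral\<^sup>L lborel (\<lambda>u. (G u)\<^sup>2) = (LBINT \<theta>:{-T..0}. (phi \<theta>)\<^sup>2)"
    unfolding G2e using lborel_shift(1)[of "\<lambda>\<theta>. indicator {-T..0} \<theta> * (phi \<theta>)\<^sup>2" \<tau>]
    by (simp add: set_lebesgue_integral_def)
  note cs = cs_int[OF mf mG if2 iG2]
  have intf2: "integral\<^sup>L lborel (\<lambda>u. (f u)\<^sup>2) = A2"
  proof -
    have "(\<lambda>u. (f u)\<^sup>2) = (\<lambda>u. indicator {-T..0} u * (a' u)\<^sup>2)"
      by (auto simp: fun_eq_iff f_def power2_eq_square split: split_indicator)
    then show ?thesis by (simp add: A2_def set_lebesgue_integral_def)
  qed
  have csb: "integral\<^sup>L lborel (\<lambda>u. \<bar>f u * G u\<bar>) \<le> sqrt A2 * nn"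
  proof -
    have "integral\<^sup>L lborel (\<lambda>u. \<bar>f u * G u\<bar>) \<le> sqrt A2 * sqrt (LBINT \<theta>:{-T..0}. (phi \<theta>)\<^sup>2)"
      using cs(2) unfolding intf2 intG2 .
    also have "sqrt (LBINT \<theta>:{-T..0}. (phi \<theta>)\<^sup>2) \<le> nn"
      using phi2_le nn_nonneg real_sqrt_le_mono[OF phi2_le] by simp
    then have "sqrt A2 * sqrt (LBINT \<theta>:{-T..0}. (phi \<theta>)\<^sup>2) \<le> sqrt A2 * nn"
      by (rule mult_left_mono) (simp add: A2_nonneg)
    finally show ?thesis .
  qed
  have iabs: "integrable lborel (\<lambda>u. indicator {-T..0} u * \<bar>a' u\<bar>)"
    using integrable_abs[OF a'int[unfolded set_integrable_def]] by (simp add: abs_mult)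
  have "\<bar>integral\<^sup>L lborel (\<lambda>u. indicator {-T..0} u * (a' u * V u))\<bar>
      \<le> integral\<^sup>L lborel (\<lambda>u. indicator {-T..0} u * \<bar>a' u\<bar> * (Bi + nn) + \<bar>f u * G u\<bar>)"
  proof (rule abs_int_bound)
    show "integrable lborel (\<lambda>u. indicator {-T..0} u * \<bar>a' u\<bar> * (Bi + nn) + \<bar>f u * G u\<bar>)"
      using iabs cs(1) by auto
    fix u show "\<bar>indicator {-T..0} u * (a' u * V u)\<bar> \<le> indicator {-T..0} u * \<bar>a' u\<bar> * (Bi + nn) + \<bar>f u * G u\<bar>"
    proof (cases "u \<in> {-T..0}")
      case True
      have "\<bar>a' u * V u\<bar> = \<bar>a' u\<bar> * \<bar>V u\<bar>" by (simp add: abs_mult)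
      also have "\<dots> \<le> \<bar>a' u\<bar> * (Bi + nn + \<bar>G u\<bar>)" using Vb[OF True] by (simp add: mult_left_mono)
      also have "\<dots> = \<bar>a' u\<bar> * (Bi + nn) + \<bar>f u * G u\<bar>" using True by (simp add: f_def abs_mult algebra_simps)
      finally show ?thesis using True by simp
    qed simp
  qed
  also have "\<dots> = A1 * (Bi + nn) + integral\<^sup>L lborel (\<lambda>u. \<bar>f u * G u\<bar>)"
  proof -
    have "integral\<^sup>L lborel (\<lambda>u. indicator {-T..0} u * \<bar>a' u\<bar> * (Bi + nn) + \<bar>f u * G u\<bar>)
        = integral\<^sup>L lborel (\<lambda>u. indicator {-T..0} u * \<bar>a' u\<bar> * (Bi + nn)) + integral\<^sup>L lborel (\<lambda>u. \<bar>f u * G u\<bar>)"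
      by (rule Bochner_Integration.integral_add) (use iabs cs(1) in auto)
    also have "integral\<^sup>L lborel (\<lambda>u. indicator {-T..0} u * \<bar>a' u\<bar> * (Bi + nn)) = A1 * (Bi + nn)"
      by (simp add: A1_def set_lebesgue_integral_def)
    finally show ?thesis .
  qed
  also have "\<dots> \<le> A1 * (Bi + nn) + sqrt A2 * nn" using csb by simp
  finally have "\<bar>LBINT s:{-T..0}. a s * D1 \<tau> s\<bar> \<le> A1 * (Bi + nn) + sqrt A2 * nn" unfolding e1 .
  then show ?thesis using gb1 L_nonneg unfolding Bi_def
    by (smt (verit, ccfv_SIG) mult_left_mono)
qed

end

context sol begin

lemma D0_bound: "\<theta> \<in> {0..T} \<Longrightarrow> \<bar>D0 \<theta>\<bar> \<le> KK * nn"
proof -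
  define E where "E = exp (r*T)"
  define c1 where "c1 = L * (1 + A1 / lam)"
  have lam0: "lam > 0" using lam_ge1 by simp
  define w where "w = (\<lambda>\<theta>. \<bar>D0 \<theta>\<bar> * exp (- (lam * \<theta>)))"
  have contw: "continuous_on {0..T} w"
    unfolding w_def by (intro continuous_intros continuous_on_subset[OF D0cont]) auto
  obtain \<theta>0 where th0: "\<theta>0 \<in> {0..T}" and wmax: "\<And>y. y \<in> {0..T} \<Longrightarrow> w y \<le> w \<theta>0"
    using continuous_attains_sup[OF compact_Icc _ contw] T by auto
  define Mw where "Mw = w \<theta>0"
  have Mw0: "Mw \<ge> 0" by (simp add: Mw_def w_def)
  define b where "b = (\<lambda>\<theta>. Mw * exp (lam * \<theta>))"
  have bc: "continuous_on {0..T} b" unfolding b_def by (intro continuous_intros)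
  have bb: "\<bar>D0 \<theta>\<bar> \<le> b \<theta>" if th: "\<theta> \<in> {0..T}" for \<theta>
  proof -
    have "\<bar>D0 \<theta>\<bar> = w \<theta> * exp (lam * \<theta>)" by (simp add: w_def exp_minus field_simps)
    also have "\<dots> \<le> Mw * exp (lam * \<theta>)" using wmax[OF th] by (simp add: Mw_def)
    finally show ?thesis by (simp add: b_def)
  qed
  have Bi: "(LBINT \<theta>:{0..\<tau>}. b \<theta>) \<le> Mw * exp (lam * \<tau>) / lam" if "\<tau> \<ge> 0" for \<tau>
  proof -
    have "(LBINT \<theta>:{0..\<tau>}. b \<theta>) = Mw * ((exp (lam * \<tau>) - 1) / lam)"
      unfolding b_def set_integral_mult_right exp_int[OF lam0 that] ..
    also have "\<dots> \<le> Mw * (exp (lam * \<tau>) / lam)"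
      using Mw0 lam0 by (intro mult_left_mono divide_right_mono) auto
    finally show ?thesis by simp
  qed
  have gb: "\<bar>g \<tau>\<bar> \<le> c1 * Mw * exp (lam * \<tau>) + c2 * nn" if tau: "\<tau> \<in> {0..T}" for \<tau>
  proof -
    have "\<bar>g \<tau>\<bar> \<le> L * (\<bar>D0 \<tau>\<bar> + (A1 * ((LBINT \<theta>:{0..\<tau>}. b \<theta>) + nn) + sqrt A2 * nn))"
      by (rule g_bound[OF tau bc bb])
    also have "\<dots> \<le> L * (Mw * exp (lam * \<tau>) + (A1 * (Mw * exp (lam * \<tau>) / lam + nn) + sqrt A2 * nn))"
      using bb[OF tau] Bi[of \<tau>] tau L_nonneg A1_nonneg A2_nonneg
      by (intro mult_left_mono add_mono) (auto simp: b_def)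
    also have "\<dots> = c1 * Mw * exp (lam * \<tau>) + c2 * nn"
      by (simp add: c1_def c2_def algebra_simps)
    finally show ?thesis .
  qed
  have D0b: "\<bar>D0 t\<bar> \<le> E * (r + c2 * T) * nn + E * c1 / lam * (Mw * exp (lam * t))" if t: "t \<in> {0..T}" for t
  proof -
    have t0: "t \<ge> 0" using t by simp
    have i1: "\<bar>LBINT \<tau>:{0..t}. g \<tau> * exp (r*(t-\<tau>))\<bar> \<le> (LBINT \<tau>:{0..t}. E * (c1 * Mw * exp (lam * \<tau>) + c2 * nn))"
      unfolding set_lebesgue_integral_def real_scaleR_def
    proof (rule abs_int_bound)
      have "set_integrable lborel {0..t} (\<lambda>\<tau>. E * (c1 * Mw * exp (lam * \<tau>) + c2 * nn))"
        by (rule borel_integrable_atLeastAtMost') (intro continuous_intros)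
      then show "integrable lborel (\<lambda>x. indicator {0..t} x * (E * (c1 * Mw * exp (lam * x) + c2 * nn)))"
        by (simp add: set_integrable_def)
      fix x show "\<bar>indicator {0..t} x * (g x * exp (r * (t - x)))\<bar> \<le> indicator {0..t} x * (E * (c1 * Mw * exp (lam * x) + c2 * nn))"
      proof (cases "x \<in> {0..t}")
        case True
        then have xT: "x \<in> {0..T}" using t by auto
        have "exp (r * (t - x)) \<le> E" unfolding E_def using True t r by auto
        then have "\<bar>g x\<bar> * exp (r * (t - x)) \<le> (c1 * Mw * exp (lam * x) + c2 * nn) * E"
          using gb[OF xT] by (intro mult_mono) auto
        then show ?thesis using True by (simp add: abs_mult mult.commute)
      qed simp
    qed
    have i2: "(LBINT \<tau>:{0..t}. E * (c1 * Mw * exp (lam * \<tau>) + c2 * nn)) = E * (c1 * Mw * ((exp (lam * t) - 1) / lam) + c2 * nn * t)"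
    proof -
      have "(LBINT \<tau>:{0..t}. E * (c1 * Mw * exp (lam * \<tau>) + c2 * nn)) = E * (LBINT \<tau>:{0..t}. (c1 * Mw * exp (lam * \<tau>) + c2 * nn))"
        by simp
      also have "(LBINT \<tau>:{0..t}. (c1 * Mw * exp (lam * \<tau>) + c2 * nn)) = (LBINT \<tau>:{0..t}. c1 * Mw * exp (lam * \<tau>)) + (LBINT \<tau>:{0..t}. c2 * nn)"
        by (rule set_integral_add(2)) (auto intro!: borel_integrable_atLeastAtMost' continuous_intros)
      also have "(LBINT \<tau>:{0..t}. c1 * Mw * exp (lam * \<tau>)) = c1 * Mw * ((exp (lam * t) - 1) / lam)"
        unfolding set_integral_mult_right exp_int[OF lam0 t0] ..
      also have "(LBINT \<tau>:{0..t}. c2 * nn) = c2 * nn * t"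
        using t0 by (simp add: set_integral_const)
      finally show ?thesis .
    qed
    have "\<bar>D0 t\<bar> \<le> \<bar>z0 * exp (r*t)\<bar> + \<bar>LBINT \<tau>:{0..t}. g \<tau> * exp (r*(t-\<tau>))\<bar>"
      unfolding D0eq[OF t0] by (rule abs_triangle_ineq)
    also have "\<bar>z0 * exp (r*t)\<bar> \<le> r * nn * E"
    proof -
      have "exp (r*t) \<le> E" unfolding E_def using t r by auto
      then have "\<bar>z0\<bar> * exp (r*t) \<le> r * nn * E" using z0_le' by (intro mult_mono) auto
      then show ?thesis by (simp add: abs_mult)
    qed
    also note i1
    also note i2
    also have "E * (c1 * Mw * ((exp (lam * t) - 1) / lam) + c2 * nn * t) \<le> E * (c1 * Mw * (exp (lam * t) / lam) + c2 * nn * T)"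
    proof -
      have c10: "c1 \<ge> 0" unfolding c1_def using L_nonneg A1_nonneg lam0 by simp
      have "c1 * Mw * ((exp (lam * t) - 1) / lam) \<le> c1 * Mw * (exp (lam * t) / lam)"
        using c10 Mw0 lam0 by (intro mult_left_mono divide_right_mono) auto
      moreover have "c2 * nn * t \<le> c2 * nn * T" using c2_nonneg nn_nonneg t by (intro mult_left_mono) auto
      ultimately have "c1 * Mw * ((exp (lam * t) - 1) / lam) + c2 * nn * t \<le> c1 * Mw * (exp (lam * t) / lam) + c2 * nn * T"
        by (rule add_mono)
      then show ?thesis unfolding E_def by (rule mult_left_mono) simp
    qed
    finally show ?thesis by (simp add: algebra_simps)
  qed
  have half: "E * c1 / lam \<le> 1/2"
  proof -
    have "A1 * 1 \<le> A1 * lam" by (rule mult_left_mono[OF lam_ge1 A1_nonneg])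
    then have "A1 / lam \<le> A1" using lam0 by (simp add: divide_le_eq)
    then have "c1 \<le> L * (1 + A1)"
      unfolding c1_def using L_nonneg by (intro mult_left_mono) auto
    then have "E * c1 \<le> E * (L * (1 + A1))" by (simp add: E_def)
    also have "\<dots> \<le> lam / 2" unfolding lam_def E_def by simp
    finally show ?thesis using lam0 by (simp add: divide_le_eq)
  qed
  have "Mw \<le> E * (r + c2 * T) * nn + Mw / 2"
  proof -
    have ex: "exp (- (lam * \<theta>0)) \<le> 1" "exp (- (lam * \<theta>0)) \<ge> 0" using lam0 th0 by auto
    have "Mw = \<bar>D0 \<theta>0\<bar> * exp (- (lam * \<theta>0))" by (simp add: Mw_def w_def)
    also have "\<dots> \<le> (E * (r + c2 * T) * nn + E * c1 / lam * (Mw * exp (lam * \<theta>0))) * exp (- (lam * \<theta>0))"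
      using D0b[OF th0] ex by (intro mult_right_mono) auto
    also have "\<dots> = E * (r + c2 * T) * nn * exp (- (lam * \<theta>0)) + E * c1 / lam * Mw"
      by (simp add: algebra_simps exp_minus)
    also have "\<dots> \<le> E * (r + c2 * T) * nn + 1/2 * Mw"
    proof (intro add_mono)
      have "E * (r + c2 * T) * nn \<ge> 0" unfolding E_def using r c2_nonneg T nn_nonneg by simp
      then show "E * (r + c2 * T) * nn * exp (- (lam * \<theta>0)) \<le> E * (r + c2 * T) * nn"
        using ex by (simp add: mult_left_le)
      show "E * c1 / lam * Mw \<le> 1/2 * Mw" using half Mw0 by (rule mult_right_mono)
    qed
    finally show ?thesis by simp
  qed
  then have MwK: "Mw \<le> K0 * nn" by (simp add: K0_def E_def)
  fix \<theta> assume th: "\<theta> \<in> {0..T}"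
  have "\<bar>D0 \<theta>\<bar> \<le> Mw * exp (lam * \<theta>)" using bb[OF th] by (simp add: b_def)
  also have "\<dots> \<le> K0 * nn * exp (lam * T)"
    using MwK th lam0 Mw0 by (intro mult_mono) auto
  finally show "\<bar>D0 \<theta>\<bar> \<le> KK * nn" by (simp add: KK_def algebra_simps)
qed

end

context sol begin

lemma P_bound:
  assumes t: "t \<ge> 0" and s: "s \<in> {-T..0}"
  shows "\<bar>if t + s < 0 then Z1 (t+s) else 0\<bar> \<le> nn + \<bar>indicator {-T..0} (t+s) * phi (t+s)\<bar>"
proof (cases "t + s < 0")
  case True
  then have "t + s \<in> {-T..0}" using s t by auto
  then have Gu: "indicator {-T..0} (t+s) * phi (t+s) = phi (t+s)" by simp
  have "Z1 (t+s) = z0 / r - phi (t+s)" by (simp add: phi_def)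
  then have "\<bar>Z1 (t+s)\<bar> \<le> \<bar>z0 / r\<bar> + \<bar>phi (t+s)\<bar>" by (metis abs_triangle_ineq4)
  also have "\<bar>z0 / r\<bar> = \<bar>z0\<bar> / r" using r by simp
  finally have "\<bar>Z1 (t+s)\<bar> \<le> nn + \<bar>phi (t+s)\<bar>" using z0_le by linarith
  then show ?thesis using True unfolding Gu by simp
qed (use nn_nonneg in simp)

lemma main_bound:
  assumes t: "t \<in> {0..T}"
  shows "norm_m1 T r (hdiff (X t) (Xb t)) \<le> CC * nn"
    and "\<bar>fst (X t) - fst (Xb t)\<bar> \<le> r * CC * nn"
proof -
  have t0: "t \<ge> 0" using t by simp
  have Dt: "\<bar>D0 t\<bar> \<le> KK * nn" using D0_bound[OF t] .
  have KC: "KK / r \<le> CC"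
  proof -
    have "0 \<le> (KK/r)\<^sup>2 + 2 * T * (KK/r + T*KK + 1)\<^sup>2 + 2" using T by simp
    then have "0 \<le> sqrt ((KK/r)\<^sup>2 + 2 * T * (KK/r + T*KK + 1)\<^sup>2 + 2)" by simp
    then show ?thesis unfolding CC_def by linarith
  qed
  show "\<bar>fst (X t) - fst (Xb t)\<bar> \<le> r * CC * nn"
  proof -
    have "KK * nn = r * (KK / r) * nn" using r by simp
    also have "\<dots> \<le> r * CC * nn" using KC r nn_nonneg by (intro mult_right_mono mult_left_mono) auto
    finally show ?thesis using Dt by (simp add: D0_def)
  qed
  define psi where "psi = (\<lambda>s. D0 t / r - (LBINT u:{s..0}. D1 t u))"
  define G where "G = (\<lambda>s. indicator {-T..0} (t+s) * phi (t+s))"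
  define Bc where "Bc = (KK/r + T*KK + 1) * nn"
  have Bc0: "Bc \<ge> 0" unfolding Bc_def using KK_nonneg r T nn_nonneg by simp
  have nm: "norm_m1 T r (hdiff (X t) (Xb t)) = sqrt ((D0 t / r)\<^sup>2 + (LBINT s:{-T..0}. (psi s)\<^sup>2))"
    by (simp add: norm_m1_def hnorm_def Ainv_def hdiff_def D0_def D1_def psi_def)
  have psib: "\<bar>psi s\<bar> \<le> Bc + \<bar>G s\<bar>" if s: "s \<in> {-T..0}" for s
  proof -
    have W: "(LBINT u:{s..0}. D1 t u) = (if t + s < 0 then Z1 (t+s) else 0) + (LBINT \<theta>:{max (t+s) 0..t}. D0 \<theta>)"
      by (rule W_lemma[OF t s])
    have Qb: "\<bar>LBINT \<theta>:{max (t+s) 0..t}. D0 \<theta>\<bar> \<le> (LBINT \<theta>:{0..t}. KK * nn)"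
      by (rule Q_bound[OF t]) (use D0_bound in auto)
    also have "(LBINT \<theta>:{0..t}. KK * nn) = t * (KK * nn)" using t0 by (simp add: set_integral_const)
    also have "\<dots> \<le> T * (KK * nn)" using t KK_nonneg nn_nonneg by (intro mult_right_mono) auto
    finally have Qb': "\<bar>LBINT \<theta>:{max (t+s) 0..t}. D0 \<theta>\<bar> \<le> T * (KK * nn)" .
    have Pb: "\<bar>if t + s < 0 then Z1 (t+s) else 0\<bar> \<le> nn + \<bar>G s\<bar>"
      unfolding G_def by (rule P_bound[OF t0 s])
    have D0r: "\<bar>D0 t / r\<bar> \<le> KK * nn / r" using Dt r by (simp add: divide_right_mono)
    have "\<bar>psi s\<bar> \<le> \<bar>D0 t / r\<bar> + \<bar>if t + s < 0 then Z1 (t+s) else 0\<bar> + \<bar>LBINT \<theta>:{max (t+s) 0..t}. D0 \<theta>\<bar>"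
      unfolding psi_def W by (smt (verit, best) abs_triangle_ineq)
    also have "\<dots> \<le> KK * nn / r + (nn + \<bar>G s\<bar>) + T * (KK * nn)"
      using D0r Pb Qb' by linarith
    also have "\<dots> = Bc + \<bar>G s\<bar>" by (simp add: Bc_def algebra_simps)
    finally show ?thesis .
  qed
  have G2e: "(\<lambda>s. (G s)\<^sup>2) = (\<lambda>s. (\<lambda>\<theta>. indicator {-T..0} \<theta> * (phi \<theta>)\<^sup>2) (t + s))"
    by (auto simp: fun_eq_iff G_def power2_eq_square split: split_indicator)
  have iG2: "integrable lborel (\<lambda>s. (G s)\<^sup>2)"
    unfolding G2e using phi2_int lborel_shift(2)[of "\<lambda>\<theta>. indicator {-T..0} \<theta> * (phi \<theta>)\<^sup>2" t] by simp
  have intG2: "integral\<^sup>L lborel (\<lambda>s. (G s)\<^sup>2) = (LBINT \<theta>:{-T..0}. (phi \<theta>)\<^sup>2)"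
    unfolding G2e using lborel_shift(1)[of "\<lambda>\<theta>. indicator {-T..0} \<theta> * (phi \<theta>)\<^sup>2" t]
    by (simp add: set_lebesgue_integral_def)
  have ic: "integrable lborel (\<lambda>s. indicator {-T..0} s * (2 * Bc\<^sup>2))"
    by (simp add: emeasure_lborel_Icc_eq)
  have "\<bar>LBINT s:{-T..0}. (psi s)\<^sup>2\<bar> \<le> integral\<^sup>L lborel (\<lambda>s. indicator {-T..0} s * (2 * Bc\<^sup>2) + 2 * (G s)\<^sup>2)"
    unfolding set_lebesgue_integral_def real_scaleR_def
  proof (rule abs_int_bound)
    show "integrable lborel (\<lambda>s. indicator {-T..0} s * (2 * Bc\<^sup>2) + 2 * (G s)\<^sup>2)"
      using ic iG2 by auto
    fix s show "\<bar>indicator {-T..0} s * (psi s)\<^sup>2\<bar> \<le> indicator {-T..0} s * (2 * Bc\<^sup>2) + 2 * (G s)\<^sup>2"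
    proof (cases "s \<in> {-T..0}")
      case True
      have "\<bar>psi s\<bar>\<^sup>2 \<le> (Bc + \<bar>G s\<bar>)\<^sup>2" using psib[OF True] by (intro power_mono) auto
      also have "\<dots> \<le> 2 * Bc\<^sup>2 + 2 * (G s)\<^sup>2"
        using zero_le_square[of "Bc - \<bar>G s\<bar>"] by (simp add: power2_eq_square algebra_simps)
      finally show ?thesis using True by simp
    qed simp
  qed
  also have "\<dots> = 2 * Bc\<^sup>2 * T + 2 * (LBINT \<theta>:{-T..0}. (phi \<theta>)\<^sup>2)"
  proof -
    have "integral\<^sup>L lborel (\<lambda>s. indicator {-T..0} s * (2 * Bc\<^sup>2) + 2 * (G s)\<^sup>2)
        = integral\<^sup>L lborel (\<lambda>s. indicator {-T..0} s * (2 * Bc\<^sup>2)) + integral\<^sup>L lborel (\<lambda>s. 2 * (G s)\<^sup>2)"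
      by (rule Bochner_Integration.integral_add) (use ic iG2 in auto)
    also have "integral\<^sup>L lborel (\<lambda>s. indicator {-T..0} s * (2 * Bc\<^sup>2)) = 2 * Bc\<^sup>2 * T"
      using T by simp
    also have "integral\<^sup>L lborel (\<lambda>s. 2 * (G s)\<^sup>2) = 2 * (LBINT \<theta>:{-T..0}. (phi \<theta>)\<^sup>2)"
      using intG2 by simp
    finally show ?thesis .
  qed
  also have "\<dots> \<le> 2 * Bc\<^sup>2 * T + 2 * nn\<^sup>2" using phi2_le by simp
  finally have I: "(LBINT s:{-T..0}. (psi s)\<^sup>2) \<le> 2 * Bc\<^sup>2 * T + 2 * nn\<^sup>2" by simp
  have D0s: "(D0 t / r)\<^sup>2 \<le> (KK * nn / r)\<^sup>2"
  proof -
    have "\<bar>D0 t / r\<bar> \<le> KK * nn / r" using Dt r by (simp add: divide_right_mono)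
    then have "\<bar>D0 t / r\<bar>\<^sup>2 \<le> (KK * nn / r)\<^sup>2" by (intro power_mono) auto
    then show ?thesis by (simp only: power2_abs)
  qed
  have "norm_m1 T r (hdiff (X t) (Xb t)) \<le> sqrt ((KK * nn / r)\<^sup>2 + (2 * Bc\<^sup>2 * T + 2 * nn\<^sup>2))"
    unfolding nm using D0s I by (intro real_sqrt_le_mono add_mono)
  also have "(KK * nn / r)\<^sup>2 + (2 * Bc\<^sup>2 * T + 2 * nn\<^sup>2) = nn\<^sup>2 * ((KK/r)\<^sup>2 + 2 * T * (KK/r + T*KK + 1)\<^sup>2 + 2)"
  proof -
    have "Bc\<^sup>2 = nn\<^sup>2 * (KK/r + T*KK + 1)\<^sup>2" by (simp add: Bc_def power_mult_distrib)
    then show ?thesis by (simp add: power_mult_distrib power_divide algebra_simps)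
  qed
  also have "sqrt \<dots> = nn * sqrt ((KK/r)\<^sup>2 + 2 * T * (KK/r + T*KK + 1)\<^sup>2 + 2)"
    using nn_nonneg by (simp add: real_sqrt_mult)
  also have "\<dots> \<le> nn * CC"
    using nn_nonneg KK_nonneg r by (intro mult_left_mono) (auto simp: CC_def)
  finally show "norm_m1 T r (hdiff (X t) (Xb t)) \<le> CC * nn" by (simp add: mult.commute)
qed

end

theorem lemma3p5:
  fixes T r :: real and a :: "real \<Rightarrow> real" and f0 :: "real \<times> real \<Rightarrow> real"
  assumes "T > 0" and "r > 0"
    and "W12 T a" and "\<forall>s\<in>{-T..0}. a s \<ge> 0" and "a (-T) = 0"
    and "\<exists>L. L-lipschitz_on UNIV f0"
  shows "\<exists>C>0. \<forall>\<eta> \<eta>b X Xb.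
           in_H T \<eta> \<longrightarrow> in_H T \<eta>b \<longrightarrow>
           mild_sol T r a f0 (\<lambda>_. 0) \<eta> X \<longrightarrow> mild_sol T r a f0 (\<lambda>_. 0) \<eta>b Xb \<longrightarrow>
           (\<forall>t\<in>{0..T}.
              norm_m1 T r (hdiff (X t) (Xb t)) \<le> C * norm_m1 T r (hdiff \<eta> \<eta>b) \<and>
              \<bar>fst (X t) - fst (Xb t)\<bar> \<le> r * C * norm_m1 T r (hdiff \<eta> \<eta>b))"
proof -
  obtain a' where a'L2: "L2 T a'" and aint: "\<forall>s\<in>{-T..0}. a s = a (-T) + (LBINT u:{-T..s}. a' u)"
    using assms(3) unfolding W12_def by blast
  obtain L where lip: "L-lipschitz_on UNIV f0" using assms(6) by blast
  have aeq: "a s = (LBINT u:{-T..s}. a' u)" if s: "s \<in> {-T..0}" for s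
  proof -
    have "a s = a (-T) + (LBINT u:{-T..s}. a' u)" using aint s by blast
    then show ?thesis unfolding assms(5) by simp
  qed
  have S: "setting T r a a' f0 L"
    unfolding setting_def using assms(1,2) a'L2 aeq lip by blast
  interpret S: setting T r a a' f0 L by (rule S)
  show ?thesis
  proof (rule exI[of _ S.CC], intro conjI allI impI ballI)
    show "S.CC > 0" by (rule S.CC_pos)
    fix \<eta> \<eta>b X Xb t
    assume h1: "in_H T \<eta>" and h2: "in_H T \<eta>b" and h3: "mild_sol T r a f0 (\<lambda>_. 0) \<eta> X"
      and h4: "mild_sol T r a f0 (\<lambda>_. 0) \<eta>b Xb" and t: "t \<in> {0..T}"
    have so: "sol T r a a' f0 L \<eta> \<eta>b X Xb"
      by (intro sol.intro S sol_axioms.intro h1 h2 h3 h4)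
    show "norm_m1 T r (hdiff (X t) (Xb t)) \<le> S.CC * norm_m1 T r (hdiff \<eta> \<eta>b)"
      using sol.main_bound(1)[OF so t] by (simp add: sol.nn_def[OF so])
    show "\<bar>fst (X t) - fst (Xb t)\<bar> \<le> r * S.CC * norm_m1 T r (hdiff \<eta> \<eta>b)"
      using sol.main_bound(2)[OF so t] by (simp add: sol.nn_def[OF so])
  qed
qed

end
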